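(* Let $A,B$ be commutative rings with identity, $f:A\to B$ a ring homomorphism and $J$ an ideal of $B$, regarded as an $A$-module via $f$. (a) Assume that $A$ is Cohen–Macaulay in the sense of ideals and that $\operatorname{Kgrade}_A(\mathfrak a,J)\ge\operatorname{ht}\mathfrak a$ for every ideal $\mathfrak a$ of $A$. Then for every ideal $\mathfrak a$ of $A$, $$\operatorname{Kgrade}_{A\bowtie^f J}(\mathfrak a^e,A\bowtie^f J)=\operatorname{Kgrade}_A(\mathfrak a,A)\le\operatorname{Kgrade}_A(\mathfrak a,J).$$ (b) The same holds with "ideal" replaced throughout by "finitely generated ideal": if $A$ is Cohen–Macaulay in the sense of finitely generated ideals and $\operatorname{Kgrade}_A(\mathfrak a,J)\ge\operatorname{ht}\mathfrak a$ for every finitely generated ideal $\mathfrak a$ of $A$, then the displayed relation holds for every finitely generated ideal $\mathfrak a$ of $A$.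
   Context: The amalgamation is the subring $A\bowtie^fJ=\{(a,f(a)+j): a\in A,\ j\in J\}$ of $A\times B$; $\iota_A:A\to A\bowtie^fJ$, $\iota_A(x)=(x,f(x))$, and for an ideal $\mathfrak a$ of $A$, $\mathfrak a^e=\iota_A(\mathfrak a)(A\bowtie^fJ)$. Koszul grade: for a ring $R$, an $R$-module $M$ and a finitely generated ideal $\mathfrak b=(x_1,\dots,x_\ell)$, $\operatorname{Kgrade}_R(\mathfrak b,M)=\inf\{i\ge0: H^i(\operatorname{Hom}_R(\mathbb K_\bullet(x_1,\dots,x_\ell),M))\ne0\}$ ($\inf\emptyset=\infty$), independent of generators; for an arbitrary ideal $\mathfrak a$, $\operatorname{Kgrade}_R(\mathfrak a,M)=\sup$ of $\operatorname{Kgrade}_R(\mathfrak b,M)$ over finitely generated ideals $\mathfrak b\subseteq\mathfrak a$. The height of an ideal $\mathfrak a$ of $R$ is $\operatorname{ht}\mathfrak a=\inf\{\dim R_\mathfrak p:\mathfrak p\in\operatorname{Spec}R,\ \mathfrak a\subseteq\mathfrak p\}$. For a nonempty class $\mathcal C$ of ideals of $R$, $R$ is Cohen–Macaulay in the sense of $\mathcal C$ if $\operatorname{ht}\mathfrak a=\operatorname{Kgrade}_R(\mathfrak a,R)$ for all $\mathfrak a\in\mathcal C$; "in the sense of ideals" (resp. "finitely generated ideals") refers to the class of all (resp. all finitely generated) ideals. *)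

theory Defs
  imports "HOL-Algebra.Algebra" "HOL-Library.Extended_Nat"
begin

definition self_module :: "('a, 'c) ring_scheme \<Rightarrow> ('a, 'a) module" where
  "self_module R = \<lparr>carrier = carrier R, monoid.mult = monoid.mult R, monoid.one = \<one>\<^bsub>R\<^esub>,
     ring.zero = \<zero>\<^bsub>R\<^esub>, ring.add = ring.add R, smult = monoid.mult R\<rparr>"

definition ideal_module_via :: "('a, 'c) ring_scheme \<Rightarrow> ('b, 'd) ring_scheme \<Rightarrow> ('a \<Rightarrow> 'b) \<Rightarrow> 'b set \<Rightarrow> ('a, 'b) module" where
  "ideal_module_via A B f J = \<lparr>carrier = J, monoid.mult = monoid.mult B, monoid.one = \<one>\<^bsub>B\<^esub>,
     ring.zero = \<zero>\<^bsub>B\<^esub>, ring.add = ring.add B, smult = (\<lambda>a j. f a \<otimes>\<^bsub>B\<^esub> j)\<rparr>"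

text \<open>Hom_R(K_i, M) is identified with functions from the i-element subsets of {0..<l}
  to M (extended by zero); the differential is the dual of the Koszul differential
  d(e_T) = sum over j in T of (-1)^(position of j in T) x_j e_(T - {j}).\<close>

definition koszul_cochains :: "('a, 'm, 'd) module_scheme \<Rightarrow> nat \<Rightarrow> nat \<Rightarrow> (nat set \<Rightarrow> 'm) set" where
  "koszul_cochains M l i = {\<phi>. \<forall>T. (T \<subseteq> {0..<l} \<and> card T = i \<longrightarrow> \<phi> T \<in> carrier M)
                                \<and> (\<not> (T \<subseteq> {0..<l} \<and> card T = i) \<longrightarrow> \<phi> T = \<zero>\<^bsub>M\<^esub>)}"

definition koszul_d :: "('a, 'c) ring_scheme \<Rightarrow> ('a, 'm, 'd) module_scheme \<Rightarrow> 'a list \<Rightarrow> nat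
    \<Rightarrow> (nat set \<Rightarrow> 'm) \<Rightarrow> nat set \<Rightarrow> 'm" where
  "koszul_d R M xs i \<phi> T =
     (if T \<subseteq> {0..<length xs} \<and> card T = Suc i then
        (\<Oplus>\<^bsub>M\<^esub> j\<in>T. (if even (card {k\<in>T. k < j}) then xs ! j else \<ominus>\<^bsub>R\<^esub> (xs ! j)) \<odot>\<^bsub>M\<^esub> \<phi> (T - {j}))
      else \<zero>\<^bsub>M\<^esub>)"

definition koszul_cohom_nonzero :: "('a, 'c) ring_scheme \<Rightarrow> ('a, 'm, 'd) module_scheme \<Rightarrow> 'a list \<Rightarrow> nat \<Rightarrow> bool" where
  "koszul_cohom_nonzero R M xs i =
     (\<exists>\<phi>\<in>koszul_cochains M (length xs) i.
        koszul_d R M xs i \<phi> = (\<lambda>T. \<zero>\<^bsub>M\<^esub>) \<and>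
        \<phi> \<notin> (if i = 0 then {\<lambda>T. \<zero>\<^bsub>M\<^esub>}
              else koszul_d R M xs (i - 1) ` koszul_cochains M (length xs) (i - 1)))"

text \<open>Koszul grade of the ideal generated by the list xs (inf of the empty set is infinity).\<close>
definition Kgrade_gens :: "('a, 'c) ring_scheme \<Rightarrow> 'a list \<Rightarrow> ('a, 'm, 'd) module_scheme \<Rightarrow> enat" where
  "Kgrade_gens R xs M = (INF i \<in> {i. koszul_cohom_nonzero R M xs i}. enat i)"

definition Kgrade :: "('a, 'c) ring_scheme \<Rightarrow> 'a set \<Rightarrow> ('a, 'm, 'd) module_scheme \<Rightarrow> enat" where
  "Kgrade R I M = (SUP xs \<in> {xs. set xs \<subseteq> I}. Kgrade_gens R xs M)"

text \<open>dim R_p for a prime p: supremum of lengths n of chains p_0 < ... < p_n = p of primes.\<close>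
definition prime_height :: "('a, 'c) ring_scheme \<Rightarrow> 'a set \<Rightarrow> enat" where
  "prime_height R P = (SUP n \<in> {n. \<exists>c. (\<forall>i\<le>n. primeideal (c i) R) \<and> (\<forall>i<n. c i \<subset> c (Suc i)) \<and> c n = P}. enat n)"

definition height :: "('a, 'c) ring_scheme \<Rightarrow> 'a set \<Rightarrow> enat" where
  "height R I = (INF P \<in> {P. primeideal P R \<and> I \<subseteq> P}. prime_height R P)"

definition finitely_generated_ideal :: "('a, 'c) ring_scheme \<Rightarrow> 'a set \<Rightarrow> bool" where
  "finitely_generated_ideal R I = (ideal I R \<and> (\<exists>S. finite S \<and> S \<subseteq> carrier R \<and> I = genideal R S))"

definition CM_in_sense :: "('a, 'c) ring_scheme \<Rightarrow> ('a set \<Rightarrow> bool) \<Rightarrow> bool" where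
  "CM_in_sense R C = (\<forall>I. C I \<longrightarrow> height R I = Kgrade R I (self_module R))"

definition amalgamation :: "('a, 'c) ring_scheme \<Rightarrow> ('b, 'd) ring_scheme \<Rightarrow> ('a \<Rightarrow> 'b) \<Rightarrow> 'b set \<Rightarrow> ('a \<times> 'b) ring" where
  "amalgamation A B f J = \<lparr>carrier = {(a, f a \<oplus>\<^bsub>B\<^esub> j) | a j. a \<in> carrier A \<and> j \<in> J},
     monoid.mult = (\<lambda>x y. (fst x \<otimes>\<^bsub>A\<^esub> fst y, snd x \<otimes>\<^bsub>B\<^esub> snd y)),
     monoid.one = (\<one>\<^bsub>A\<^esub>, \<one>\<^bsub>B\<^esub>), ring.zero = (\<zero>\<^bsub>A\<^esub>, \<zero>\<^bsub>B\<^esub>),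
 ring.add = (\<lambda>x y. (fst x \<oplus>\<^bsub>A\<^esub> fst y, snd x \<oplus>\<^bsub>B\<^esub> snd y))\<rparr>"

definition amalg_ext :: "('a, 'c) ring_scheme \<Rightarrow> ('b, 'd) ring_scheme \<Rightarrow> ('a \<Rightarrow> 'b) \<Rightarrow> 'b set \<Rightarrow> 'a set \<Rightarrow> ('a \<times> 'b) set" where
  "amalg_ext A B f J I = genideal (amalgamation A B f J) ((\<lambda>x. (x, f x)) ` I)"

end

theory Submission
  imports Defs
begin



definition cochs :: "('a,'m,'d) module_scheme \<Rightarrow> nat set \<Rightarrow> nat \<Rightarrow> (nat set \<Rightarrow> 'm) set" where
  "cochs M I i = {\<phi>. \<forall>T. (T \<subseteq> I \<and> card T = i \<longrightarrow> \<phi> T \<in> carrier M)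
                                \<and> (\<not> (T \<subseteq> I \<and> card T = i) \<longrightarrow> \<phi> T = \<zero>\<^bsub>M\<^esub>)}"

definition ksg :: "('a,'c) ring_scheme \<Rightarrow> bool \<Rightarrow> 'a" where
  "ksg R b = (if b then \<one>\<^bsub>R\<^esub> else \<ominus>\<^bsub>R\<^esub> \<one>\<^bsub>R\<^esub>)"

definition kd :: "('a, 'c) ring_scheme \<Rightarrow> ('a, 'm, 'd) module_scheme \<Rightarrow> (nat \<Rightarrow> 'a) \<Rightarrow> nat set \<Rightarrow> nat
    \<Rightarrow> (nat set \<Rightarrow> 'm) \<Rightarrow> nat set \<Rightarrow> 'm" where
  "kd R M x I i \<phi> T =
     (if T \<subseteq> I \<and> card T = Suc i then
        (\<Oplus>\<^bsub>M\<^esub> j\<in>T. (ksg R (even (card {k\<in>T. k < j})) \<otimes>\<^bsub>R\<^esub> x j) \<odot>\<^bsub>M\<^esub> \<phi> (T - {j}))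
      else \<zero>\<^bsub>M\<^esub>)"

definition padd :: "('a,'m,'d) module_scheme \<Rightarrow> (nat set \<Rightarrow> 'm) \<Rightarrow> (nat set \<Rightarrow> 'm) \<Rightarrow> nat set \<Rightarrow> 'm" where
  "padd M \<phi> \<psi> = (\<lambda>T. \<phi> T \<oplus>\<^bsub>M\<^esub> \<psi> T)"
definition psm :: "('a,'m,'d) module_scheme \<Rightarrow> 'a \<Rightarrow> (nat set \<Rightarrow> 'm) \<Rightarrow> nat set \<Rightarrow> 'm" where
  "psm M r \<phi> = (\<lambda>T. r \<odot>\<^bsub>M\<^esub> \<phi> T)"
definition zc :: "('a,'m,'d) module_scheme \<Rightarrow> nat set \<Rightarrow> 'm" where
  "zc M = (\<lambda>T. \<zero>\<^bsub>M\<^esub>)"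

definition cob where
  "cob R M x I i = (if i = 0 then {zc M} else kd R M x I (i - 1) ` cochs M I (i - 1))"

definition nz where
  "nz R M x I i = (\<exists>\<phi>\<in>cochs M I i. kd R M x I i \<phi> = zc M \<and> \<phi> \<notin> cob R M x I i)"

definition acyc where
  "acyc R M x I n = (\<forall>i<n. \<not> nz R M x I i)"

context module
begin

lemma kd_in: "T \<subseteq> I \<Longrightarrow> card T = Suc i \<Longrightarrow> kd R M x I i \<phi> T =
   (\<Oplus>\<^bsub>M\<^esub> j\<in>T. (ksg R (even (card {k\<in>T. k < j})) \<otimes> x j) \<odot>\<^bsub>M\<^esub> \<phi> (T - {j}))"
  by (simp add: kd_def)
lemma kd_out: "\<not> (T \<subseteq> I \<and> card T = Suc i) \<Longrightarrow> kd R M x I i \<phi> T = \<zero>\<^bsub>M\<^esub>"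
  unfolding kd_def by auto

lemma fin_Suc: "card T = Suc i \<Longrightarrow> finite T"
  using card.infinite by force

lemma ksg_closed[simp]: "ksg R b \<in> carrier R"
  by (simp add: ksg_def)

lemma ksg_mult: "ksg R a \<otimes> ksg R b = ksg R (a = b)"
  unfolding ksg_def by (cases a; cases b; simp; algebra)

lemma ksg_sq: "ksg R a \<otimes> ksg R a = \<one>"
  unfolding ksg_def by (cases a; simp; algebra)

lemma ksg_True[simp]: "ksg R True = \<one>" by (simp add: ksg_def)

lemma ksg_neg: "ksg R (\<not> a) = \<ominus> ksg R a"
  by (auto simp: ksg_def R.add.inv_inv)

lemma cochsD1: "\<phi> \<in> cochs M I i \<Longrightarrow> T \<subseteq> I \<Longrightarrow> card T = i \<Longrightarrow> \<phi> T \<in> carrier M"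
  by (simp add: cochs_def)
lemma cochsD2: "\<phi> \<in> cochs M I i \<Longrightarrow> \<not> (T \<subseteq> I \<and> card T = i) \<Longrightarrow> \<phi> T = \<zero>\<^bsub>M\<^esub>"
  by (simp add: cochs_def)
lemma cochs_carrier: "\<phi> \<in> cochs M I i \<Longrightarrow> \<phi> T \<in> carrier M"
  by (cases "T \<subseteq> I \<and> card T = i") (auto simp: cochs_def)

lemma cochs_eqI:
  assumes "\<phi> \<in> cochs M I i" "\<psi> \<in> cochs M I i"
    and "\<And>T. T \<subseteq> I \<Longrightarrow> card T = i \<Longrightarrow> \<phi> T = \<psi> T"
  shows "\<phi> = \<psi>"
proof
  fix T show "\<phi> T = \<psi> T"
    using assms by (cases "T \<subseteq> I \<and> card T = i") (auto simp: cochs_def)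
qed

lemma zc_cochs[simp]: "zc M \<in> cochs M I i"
  by (simp add: cochs_def zc_def)

lemma padd_cochs[simp]: "\<phi> \<in> cochs M I i \<Longrightarrow> \<psi> \<in> cochs M I i \<Longrightarrow> padd M \<phi> \<psi> \<in> cochs M I i"
  by (auto simp: cochs_def padd_def)

lemma psm_cochs[simp]: "r \<in> carrier R \<Longrightarrow> \<phi> \<in> cochs M I i \<Longrightarrow> psm M r \<phi> \<in> cochs M I i"
  by (auto simp: cochs_def psm_def)

end

locale kz = module R M for R (structure) and M (structure) +
  fixes x :: "nat \<Rightarrow> 'a"
  assumes x_carr[simp]: "x j \<in> carrier R"
begin

lemma kd_cong:
  assumes "\<And>j. j \<in> I \<Longrightarrow> x j = y j" "\<phi> \<in> cochs M I i"
  shows "kd R M x I i \<phi> = kd R M y I i \<phi>"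
proof (intro ext)
  fix T
  show "kd R M x I i \<phi> T = kd R M y I i \<phi> T"
    unfolding kd_def using assms cochs_carrier[OF assms(2)]
    by (auto intro!: M.finsum_cong' simp flip: assms(1))
qed

lemma kd_term_closed:
  assumes "\<phi> \<in> cochs M I i"
  shows "(\<lambda>j. (ksg R (b j) \<otimes> x j) \<odot>\<^bsub>M\<^esub> \<phi> (T - {j})) \<in> T \<rightarrow> carrier M"
  using assms cochs_carrier[OF assms] by auto

lemma kd_cochs[simp]:
  assumes "\<phi> \<in> cochs M I i"
  shows "kd R M x I i \<phi> \<in> cochs M I (Suc i)"
  unfolding cochs_def kd_def
  using assms cochs_carrier[OF assms] by (auto intro!: M.finsum_closed)

lemma kd_zc[simp]: "kd R M x I i (zc M) = zc M"
proof -
  { fix T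
    have "(\<Oplus>\<^bsub>M\<^esub>j\<in>T. (ksg R (even (card {k \<in> T. k < j})) \<otimes> x j) \<odot>\<^bsub>M\<^esub> \<zero>\<^bsub>M\<^esub>) = (\<Oplus>\<^bsub>M\<^esub>j\<in>T. \<zero>\<^bsub>M\<^esub>)"
      by (rule M.finsum_cong) auto
    also have "... = \<zero>\<^bsub>M\<^esub>" by simp
    finally have "(\<Oplus>\<^bsub>M\<^esub>j\<in>T. (ksg R (even (card {k \<in> T. k < j})) \<otimes> x j) \<odot>\<^bsub>M\<^esub> \<zero>\<^bsub>M\<^esub>) = \<zero>\<^bsub>M\<^esub>" . }
  then show ?thesis by (auto simp: kd_def zc_def fun_eq_iff)
qed


lemma kd_padd:
  assumes "\<phi> \<in> cochs M I i" "\<psi> \<in> cochs M I i"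
  shows "kd R M x I i (padd M \<phi> \<psi>) = padd M (kd R M x I i \<phi>) (kd R M x I i \<psi>)"
proof (intro ext)
  fix T
  note c1 = cochs_carrier[OF assms(1)] and c2 = cochs_carrier[OF assms(2)]
  show "kd R M x I i (padd M \<phi> \<psi>) T = padd M (kd R M x I i \<phi>) (kd R M x I i \<psi>) T"
  proof (cases "T \<subseteq> I \<and> card T = Suc i")
    case True
    have "(\<Oplus>\<^bsub>M\<^esub>j\<in>T. (ksg R (even (card {k \<in> T. k < j})) \<otimes> x j) \<odot>\<^bsub>M\<^esub> (\<phi> (T - {j}) \<oplus>\<^bsub>M\<^esub> \<psi> (T - {j})))
      = (\<Oplus>\<^bsub>M\<^esub>j\<in>T. (ksg R (even (card {k \<in> T. k < j})) \<otimes> x j) \<odot>\<^bsub>M\<^esub> \<phi> (T - {j}) \<oplus>\<^bsub>M\<^esub> (ksg R (even (card {k \<in> T. k < j})) \<otimes> x j) \<odot>\<^bsub>M\<^esub> \<psi> (T - {j}))"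
      by (rule M.finsum_cong') (auto simp: c1 c2 smult_r_distr)
    also have "... = (\<Oplus>\<^bsub>M\<^esub>j\<in>T. (ksg R (even (card {k \<in> T. k < j})) \<otimes> x j) \<odot>\<^bsub>M\<^esub> \<phi> (T - {j})) \<oplus>\<^bsub>M\<^esub> (\<Oplus>\<^bsub>M\<^esub>j\<in>T. (ksg R (even (card {k \<in> T. k < j})) \<otimes> x j) \<odot>\<^bsub>M\<^esub> \<psi> (T - {j}))"
      by (rule M.finsum_addf) (auto simp: c1 c2)
    finally show ?thesis using True by (simp add: kd_in padd_def)
  qed (simp add: kd_out padd_def)
qed

lemma kd_psm:
  assumes "\<phi> \<in> cochs M I i" "r \<in> carrier R"
  shows "kd R M x I i (psm M r \<phi>) = psm M r (kd R M x I i \<phi>)"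
proof (intro ext)
  fix T
  note c1 = cochs_carrier[OF assms(1)]
  show "kd R M x I i (psm M r \<phi>) T = psm M r (kd R M x I i \<phi>) T"
  proof (cases "T \<subseteq> I \<and> card T = Suc i")
    case True
    have "(\<Oplus>\<^bsub>M\<^esub>j\<in>T. (ksg R (even (card {k \<in> T. k < j})) \<otimes> x j) \<odot>\<^bsub>M\<^esub> (r \<odot>\<^bsub>M\<^esub> \<phi> (T - {j})))
      = (\<Oplus>\<^bsub>M\<^esub>j\<in>T. r \<odot>\<^bsub>M\<^esub> ((ksg R (even (card {k \<in> T. k < j})) \<otimes> x j) \<odot>\<^bsub>M\<^esub> \<phi> (T - {j})))"
      by (rule M.finsum_cong') (auto simp: c1 assms(2) smult_assoc1[symmetric] R.m_comm)
    also have "... = r \<odot>\<^bsub>M\<^esub> (\<Oplus>\<^bsub>M\<^esub>j\<in>T. (ksg R (even (card {k \<in> T. k < j})) \<otimes> x j) \<odot>\<^bsub>M\<^esub> \<phi> (T - {j}))"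
      using True by (intro finsum_smult_ldistr[symmetric]) (auto simp: c1 assms(2) intro: fin_Suc)
    finally show ?thesis using True by (simp add: kd_in psm_def)
  qed (simp add: kd_out psm_def assms)
qed

end




lemma cl1:
  assumes "finite T" "(k::nat) \<notin> T"
  shows "card {m\<in>insert k T. m < j} = card {m\<in>T. m < j} + (if k < j then 1 else 0)"
proof -
  have "{m\<in>insert k T. m < j} = (if k < j then insert k {m\<in>T. m < j} else {m\<in>T. m < j})" by auto
  then show ?thesis using assms by auto
qed

lemma cl2:
  assumes "finite T" "j \<in> T" "(j::nat) \<noteq> k"
  shows "card {m\<in>T. k < m} = card {m\<in>T - {j}. k < m} + (if k < j then 1 else 0)"
proof (cases "k < j")
  case True
  then have "{m\<in>T. k < m} = insert j {m\<in>T - {j}. k < m}" using assms(2) by blast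
  then show ?thesis using assms(1) True by simp
next
  case False
  then have "{m\<in>T. k < m} = {m\<in>T - {j}. k < m}" by blast
  then show ?thesis using False by simp
qed

lemma cl3:
  assumes "finite T" "(k::nat) \<notin> T"
  shows "card {m\<in>T. m < k} + card {m\<in>T. k < m} = card T"
proof -
  have h: "\<And>m. m\<in>T \<Longrightarrow> m < k \<or> k < m"
  proof -
    fix m assume "m \<in> T"
    then have "m \<noteq> k" using assms(2) by blast
    then show "m < k \<or> k < m" by arith
  qed
  have e: "T = {m\<in>T. m < k} \<union> {m\<in>T. k < m}"
  proof (rule Set.set_eqI)
    fix m show "m \<in> T \<longleftrightarrow> m \<in> {m\<in>T. m < k} \<union> {m\<in>T. k < m}" using h[of m] by auto
  qed
  have "card ({m\<in>T. m < k} \<union> {m\<in>T. k < m}) = card {m\<in>T. m < k} + card {m\<in>T. k < m}"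
    by (rule card_Un_disjoint) (use assms(1) in \<open>simp_all add: disjoint_iff\<close>)
  then show ?thesis using e by simp
qed

definition eps :: "nat \<Rightarrow> nat set \<Rightarrow> bool" where "eps k T = even (card {m\<in>T. k < m})"

definition comp0 :: "('a,'m,'d) module_scheme \<Rightarrow> nat set \<Rightarrow> nat \<Rightarrow> (nat set \<Rightarrow> 'm) \<Rightarrow> nat set \<Rightarrow> 'm" where
  "comp0 M I k \<phi> = (\<lambda>T. if T \<subseteq> I - {k} then \<phi> T else \<zero>\<^bsub>M\<^esub>)"
definition comp1 :: "('a,'c) ring_scheme \<Rightarrow> ('a,'m,'d) module_scheme \<Rightarrow> nat set \<Rightarrow> nat \<Rightarrow> (nat set \<Rightarrow> 'm) \<Rightarrow> nat set \<Rightarrow> 'm" where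
  "comp1 R M I k \<phi> = (\<lambda>T. if T \<subseteq> I - {k} then ksg R (eps k T) \<odot>\<^bsub>M\<^esub> \<phi> (insert k T) else \<zero>\<^bsub>M\<^esub>)"
definition bld :: "('a,'c) ring_scheme \<Rightarrow> ('a,'m,'d) module_scheme \<Rightarrow> nat set \<Rightarrow> nat \<Rightarrow> (nat set \<Rightarrow> 'm) \<Rightarrow> (nat set \<Rightarrow> 'm) \<Rightarrow> nat set \<Rightarrow> 'm" where
  "bld R M I k \<alpha> \<beta> = (\<lambda>T. if T \<subseteq> I then (if k \<in> T then ksg R (eps k (T - {k})) \<odot>\<^bsub>M\<^esub> \<beta> (T - {k}) else \<alpha> T) else \<zero>\<^bsub>M\<^esub>)"

locale kzc = kz + fixes I :: "nat set" and k :: nat assumes finI: "finite I" and kI: "k \<in> I"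
begin

lemma ksg_ksg: "m \<in> carrier M \<Longrightarrow> ksg R b \<odot>\<^bsub>M\<^esub> (ksg R b \<odot>\<^bsub>M\<^esub> m) = m"
  by (simp add: smult_assoc1[symmetric] ksg_sq)

lemma comp0_cochs[simp]: "\<phi> \<in> cochs M I i \<Longrightarrow> comp0 M I k \<phi> \<in> cochs M (I - {k}) i"
  by (auto simp: cochs_def comp0_def)

lemma comp1_cochs[simp]:
  assumes "\<phi> \<in> cochs M I i" shows "comp1 R M I k \<phi> \<in> cochs M (I - {k}) (i - 1)"
proof -
  { fix T assume T: "T \<subseteq> I - {k}"
    then have fT: "finite T" using finI finite_subset by blast
    have ci: "card (insert k T) = Suc (card T)" using T fT by (subst card_insert_disjoint) auto
    have "ksg R (eps k T) \<odot>\<^bsub>M\<^esub> \<phi> (insert k T) \<in> carrier M" using cochs_carrier[OF assms] by simp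
    moreover have "card T \<noteq> i - 1 \<Longrightarrow> \<phi> (insert k T) = \<zero>\<^bsub>M\<^esub>"
      using ci by (intro cochsD2[OF assms]) auto
    moreover have "i = 0 \<Longrightarrow> \<phi> (insert k T) = \<zero>\<^bsub>M\<^esub>"
      using ci by (intro cochsD2[OF assms]) auto
    ultimately have "ksg R (eps k T) \<odot>\<^bsub>M\<^esub> \<phi> (insert k T) \<in> carrier M"
      "card T \<noteq> i - 1 \<Longrightarrow> ksg R (eps k T) \<odot>\<^bsub>M\<^esub> \<phi> (insert k T) = \<zero>\<^bsub>M\<^esub>" by auto }
  then show ?thesis by (auto simp: cochs_def comp1_def)
qed

lemma comp1_zero:
  assumes "\<phi> \<in> cochs M I 0" shows "comp1 R M I k \<phi> = zc M"
proof
  fix T show "comp1 R M I k \<phi> T = zc M T"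
  proof (cases "T \<subseteq> I - {k}")
    case True
    then have "finite T" using finI finite_subset by blast
    then have "\<phi> (insert k T) = \<zero>\<^bsub>M\<^esub>" using cochsD2[OF assms, of "insert k T"] by auto
    then show ?thesis using True by (simp add: comp1_def zc_def)
  qed (simp add: comp1_def zc_def)
qed

lemma bld_cochs[simp]:
  assumes "\<alpha> \<in> cochs M (I - {k}) i" "\<beta> \<in> cochs M (I - {k}) (i - 1)" "i = 0 \<longrightarrow> \<beta> = zc M"
  shows "bld R M I k \<alpha> \<beta> \<in> cochs M I i"
proof -
  have A: "bld R M I k \<alpha> \<beta> T \<in> carrier M \<and> (card T \<noteq> i \<longrightarrow> bld R M I k \<alpha> \<beta> T = \<zero>\<^bsub>M\<^esub>)"
    if T: "T \<subseteq> I" for T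
  proof (cases "k \<in> T")
    case kT: True
    then have fT: "finite T" using finI finite_subset T by blast
    have ci: "card T = Suc (card (T - {k}))" using card.remove[OF fT kT] .
    have "card T \<noteq> i \<Longrightarrow> \<beta> (T - {k}) = \<zero>\<^bsub>M\<^esub>"
    proof -
      assume "card T \<noteq> i"
      show ?thesis
      proof (cases "i = 0")
        case True then show ?thesis using assms(3) by (simp add: zc_def)
      next
        case False
        have "card (T - {k}) \<noteq> i - 1" using ci \<open>card T \<noteq> i\<close> False by linarith
        then show ?thesis by (intro cochsD2[OF assms(2)]) simp
      qed
    qed
    then show ?thesis using kT T cochs_carrier[OF assms(2)] by (simp add: bld_def)
  next
    case kT: False
    then have "T \<subseteq> I - {k}" using T by blast
    then have "\<alpha> T \<in> carrier M" "card T \<noteq> i \<Longrightarrow> \<alpha> T = \<zero>\<^bsub>M\<^esub>"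
      using cochs_carrier[OF assms(1)] cochsD2[OF assms(1)] by auto
    then show ?thesis using kT T by (simp add: bld_def)
  qed
  show ?thesis unfolding cochs_def
  proof (intro CollectI allI conjI impI)
    fix T assume "T \<subseteq> I \<and> card T = i" then show "bld R M I k \<alpha> \<beta> T \<in> carrier M" using A by blast
  next
    fix T assume a: "\<not> (T \<subseteq> I \<and> card T = i)"
    show "bld R M I k \<alpha> \<beta> T = \<zero>\<^bsub>M\<^esub>"
    proof (cases "T \<subseteq> I")
      case True then show ?thesis using A a by blast
    qed (simp add: bld_def)
  qed
qed

lemma comp0_bld[simp]:
  assumes "\<alpha> \<in> cochs M (I - {k}) i"
  shows "comp0 M I k (bld R M I k \<alpha> \<beta>) = \<alpha>"
proof
  fix T show "comp0 M I k (bld R M I k \<alpha> \<beta>) T = \<alpha> T"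
    using cochsD2[OF assms, of T] by (auto simp: comp0_def bld_def)
qed

lemma comp1_bld[simp]:
  assumes "\<beta> \<in> cochs M (I - {k}) j"
  shows "comp1 R M I k (bld R M I k \<alpha> \<beta>) = \<beta>"
proof
  fix T show "comp1 R M I k (bld R M I k \<alpha> \<beta>) T = \<beta> T"
  proof (cases "T \<subseteq> I - {k}")
    case True
    then have "insert k T - {k} = T" "insert k T \<subseteq> I" using kI by auto
    then show ?thesis using True by (simp add: comp1_def bld_def ksg_ksg cochs_carrier[OF assms])
  next
    case False then show ?thesis using cochsD2[OF assms, of T] by (auto simp: comp1_def)
  qed
qed

lemma bld_comp:
  assumes "\<phi> \<in> cochs M I i"
  shows "bld R M I k (comp0 M I k \<phi>) (comp1 R M I k \<phi>) = \<phi>"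
proof
  fix T show "bld R M I k (comp0 M I k \<phi>) (comp1 R M I k \<phi>) T = \<phi> T"
  proof (cases "T \<subseteq> I")
    case True
    show ?thesis
    proof (cases "k \<in> T")
      case True
      then have "insert k (T - {k}) = T" "T - {k} \<subseteq> I - {k}" using \<open>T \<subseteq> I\<close> by auto
      then show ?thesis using True \<open>T \<subseteq> I\<close> by (simp add: comp1_def bld_def ksg_ksg cochs_carrier[OF assms])
    next
      case False
      then show ?thesis using \<open>T \<subseteq> I\<close> by (auto simp: comp0_def bld_def)
    qed
  next
    case False then show ?thesis using cochsD2[OF assms, of T] by (auto simp: bld_def)
  qed
qed

lemma cochs_eq_comp:
  assumes "\<phi> \<in> cochs M I i" "\<psi> \<in> cochs M I i"
    and "comp0 M I k \<phi> = comp0 M I k \<psi>" "comp1 R M I k \<phi> = comp1 R M I k \<psi>"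
  shows "\<phi> = \<psi>"
  using bld_comp[OF assms(1)] bld_comp[OF assms(2)] assms(3,4) by metis

lemma comp0_zc[simp]: "comp0 M I k (zc M) = zc M"
  by (auto simp: comp0_def zc_def)
lemma comp1_zc[simp]: "comp1 R M I k (zc M) = zc M"
  by (auto simp: comp1_def zc_def)
lemma comp0_padd: "comp0 M I k (padd M \<phi> \<psi>) = padd M (comp0 M I k \<phi>) (comp0 M I k \<psi>)"
  by (auto simp: comp0_def padd_def)
lemma comp0_psm: "r \<in> carrier R \<Longrightarrow> comp0 M I k (psm M r \<phi>) = psm M r (comp0 M I k \<phi>)"
  by (auto simp: comp0_def psm_def)
lemma comp1_padd:
  assumes "\<phi> \<in> cochs M I i" "\<psi> \<in> cochs M I i"
  shows "comp1 R M I k (padd M \<phi> \<psi>) = padd M (comp1 R M I k \<phi>) (comp1 R M I k \<psi>)"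
  using cochs_carrier[OF assms(1)] cochs_carrier[OF assms(2)]
  by (auto simp: comp1_def padd_def smult_r_distr)
lemma comp1_psm:
  assumes "\<phi> \<in> cochs M I i" "r \<in> carrier R"
  shows "comp1 R M I k (psm M r \<phi>) = psm M r (comp1 R M I k \<phi>)"
  using cochs_carrier[OF assms(1)] assms(2)
  by (auto simp: comp1_def psm_def smult_assoc1[symmetric] R.m_comm)

end




context kzc
begin

lemma ksg_m1: "y \<in> carrier R \<Longrightarrow> ksg R a \<otimes> (ksg R b \<otimes> y) = ksg R (a = b) \<otimes> y"
  by (simp add: R.m_assoc[symmetric] ksg_mult)
lemma ksg_m2: "y \<in> carrier R \<Longrightarrow> (ksg R b \<otimes> y) \<otimes> ksg R c = ksg R (b = c) \<otimes> y"
  by (simp add: R.m_assoc R.m_comm[of y] ksg_m1)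

lemma comp0_kd:
  assumes "\<phi> \<in> cochs M I i"
  shows "comp0 M I k (kd R M x I i \<phi>) = kd R M x (I - {k}) i (comp0 M I k \<phi>)"
proof
  fix T
  show "comp0 M I k (kd R M x I i \<phi>) T = kd R M x (I - {k}) i (comp0 M I k \<phi>) T"
  proof (cases "T \<subseteq> I - {k}")
    case True
    show ?thesis
    proof (cases "card T = Suc i")
      case c: True
      have "(\<Oplus>\<^bsub>M\<^esub> j\<in>T. (ksg R (even (card {m\<in>T. m < j})) \<otimes> x j) \<odot>\<^bsub>M\<^esub> \<phi> (T - {j}))
          = (\<Oplus>\<^bsub>M\<^esub> j\<in>T. (ksg R (even (card {m\<in>T. m < j})) \<otimes> x j) \<odot>\<^bsub>M\<^esub> comp0 M I k \<phi> (T - {j}))"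
      proof (rule M.finsum_cong')
        show "(\<lambda>j. (ksg R (even (card {m\<in>T. m < j})) \<otimes> x j) \<odot>\<^bsub>M\<^esub> comp0 M I k \<phi> (T - {j})) \<in> T \<rightarrow> carrier M"
          by (rule kd_term_closed[OF comp0_cochs[OF assms]])
        fix j assume "j \<in> T"
        have "T - {j} \<subseteq> I - {k}" using True by blast
        then show "(ksg R (even (card {m\<in>T. m < j})) \<otimes> x j) \<odot>\<^bsub>M\<^esub> \<phi> (T - {j})
          = (ksg R (even (card {m\<in>T. m < j})) \<otimes> x j) \<odot>\<^bsub>M\<^esub> comp0 M I k \<phi> (T - {j})"
          by (simp add: comp0_def)
      qed simp
      moreover have "T \<subseteq> I" using True by blast
      ultimately show ?thesis using True c by (simp add: comp0_def kd_in)
    next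
      case False
      then show ?thesis using True by (simp add: comp0_def kd_out)
    qed
  next
    case False
    then show ?thesis by (simp add: comp0_def kd_out)
  qed
qed

lemma comp1_kd:
  assumes \<phi>: "\<phi> \<in> cochs M I i"
  shows "comp1 R M I k (kd R M x I i \<phi>) =
    padd M (kd R M x (I - {k}) (i - 1) (comp1 R M I k \<phi>)) (psm M (ksg R (even i) \<otimes> x k) (comp0 M I k \<phi>))"
proof
  fix T
  note carr = cochs_carrier[OF \<phi>]
  show "comp1 R M I k (kd R M x I i \<phi>) T =
    padd M (kd R M x (I - {k}) (i - 1) (comp1 R M I k \<phi>)) (psm M (ksg R (even i) \<otimes> x k) (comp0 M I k \<phi>)) T"
  proof (cases "T \<subseteq> I - {k}")
    case False
    then show ?thesis by (simp add: comp1_def comp0_def padd_def psm_def kd_out)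
  next
    case TI: True
    then have fT: "finite T" using finI finite_subset by blast
    have kT: "k \<notin> T" using TI by blast
    have ci: "card (insert k T) = Suc (card T)" using fT kT by simp
    have ikI: "insert k T \<subseteq> I" using TI kI by blast
    show ?thesis
    proof (cases "card T = i")
      case False
      have l: "kd R M x I i \<phi> (insert k T) = \<zero>\<^bsub>M\<^esub>" using ci False by (intro kd_out) simp
      have r1: "comp0 M I k \<phi> T = \<zero>\<^bsub>M\<^esub>" using TI False cochsD2[OF \<phi>, of T] by (simp add: comp0_def)
      have r2: "kd R M x (I - {k}) (i - 1) (comp1 R M I k \<phi>) T = \<zero>\<^bsub>M\<^esub>"
      proof (cases "i = 0")
        case True
        then have "comp1 R M I k \<phi> = zc M" using comp1_zero \<phi> by simp
        then show ?thesis by (simp add: kd_zc) (simp add: zc_def)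
      next
        case False
        then show ?thesis using \<open>card T \<noteq> i\<close> by (intro kd_out) simp
      qed
      show ?thesis unfolding padd_def psm_def r1 r2 using TI by (simp add: comp1_def l)
    next
      case cT: True
      define c where "c S j = ksg R (even (card {m\<in>S. m < j})) \<otimes> x j" for S j
      have cc[simp]: "c S j \<in> carrier R" for S j by (simp add: c_def)
      define s where "s = ksg R (eps k T)"
      have sc[simp]: "s \<in> carrier R" by (simp add: s_def)
      have "kd R M x I i \<phi> (insert k T) = (\<Oplus>\<^bsub>M\<^esub> j\<in>insert k T. c (insert k T) j \<odot>\<^bsub>M\<^esub> \<phi> (insert k T - {j}))"
        using ikI ci cT by (simp add: kd_in c_def)
      also have "... = c (insert k T) k \<odot>\<^bsub>M\<^esub> \<phi> (insert k T - {k}) \<oplus>\<^bsub>M\<^esub> (\<Oplus>\<^bsub>M\<^esub> j\<in>T. c (insert k T) j \<odot>\<^bsub>M\<^esub> \<phi> (insert k T - {j}))"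
        by (rule M.finsum_insert) (use fT kT carr in auto)
      also have "insert k T - {k} = T" using kT by blast
      finally have e1: "kd R M x I i \<phi> (insert k T) = c (insert k T) k \<odot>\<^bsub>M\<^esub> \<phi> T \<oplus>\<^bsub>M\<^esub> (\<Oplus>\<^bsub>M\<^esub> j\<in>T. c (insert k T) j \<odot>\<^bsub>M\<^esub> \<phi> (insert k T - {j}))" .
      have e2: "s \<odot>\<^bsub>M\<^esub> (\<Oplus>\<^bsub>M\<^esub> j\<in>T. c (insert k T) j \<odot>\<^bsub>M\<^esub> \<phi> (insert k T - {j}))
          = (\<Oplus>\<^bsub>M\<^esub> j\<in>T. s \<odot>\<^bsub>M\<^esub> (c (insert k T) j \<odot>\<^bsub>M\<^esub> \<phi> (insert k T - {j})))"
        by (rule finsum_smult_ldistr) (use fT carr in auto)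
      have e3: "kd R M x (I - {k}) (i - 1) (comp1 R M I k \<phi>) T = (\<Oplus>\<^bsub>M\<^esub> j\<in>T. c T j \<odot>\<^bsub>M\<^esub> comp1 R M I k \<phi> (T - {j}))"
      proof (cases "i = 0")
        case True
        then have "T = {}" using cT fT by simp
        then show ?thesis by (simp add: kd_out)
      next
        case False
        then show ?thesis using TI cT by (simp add: kd_in c_def)
      qed
      have e4: "(\<Oplus>\<^bsub>M\<^esub> j\<in>T. s \<odot>\<^bsub>M\<^esub> (c (insert k T) j \<odot>\<^bsub>M\<^esub> \<phi> (insert k T - {j})))
          = (\<Oplus>\<^bsub>M\<^esub> j\<in>T. c T j \<odot>\<^bsub>M\<^esub> comp1 R M I k \<phi> (T - {j}))"
      proof (rule M.finsum_cong')
        show "(\<lambda>j. c T j \<odot>\<^bsub>M\<^esub> comp1 R M I k \<phi> (T - {j})) \<in> T \<rightarrow> carrier M"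
          using cochs_carrier[OF comp1_cochs[OF \<phi>]] by simp
        fix j assume jT: "j \<in> T"
        then have jk: "j \<noteq> k" using kT by blast
        have TjI: "T - {j} \<subseteq> I - {k}" using TI by blast
        have ins: "insert k T - {j} = insert k (T - {j})" using jk by blast
        have b1: "card {m\<in>insert k T. m < j} = card {m\<in>T. m < j} + (if k < j then 1 else 0)"
          by (rule cl1[OF fT kT])
        have b2: "card {m\<in>T. k < m} = card {m\<in>T - {j}. k < m} + (if k < j then 1 else 0)"
          by (rule cl2[OF fT jT jk])
        have bb: "(eps k T = even (card {m\<in>insert k T. m < j})) = (even (card {m\<in>T. m < j}) = eps k (T - {j}))"
          unfolding eps_def b1 b2 by auto
        have "s \<otimes> c (insert k T) j = ksg R (eps k T = even (card {m\<in>insert k T. m < j})) \<otimes> x j"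
          unfolding s_def c_def by (rule ksg_m1) simp
        also have "... = ksg R (even (card {m\<in>T. m < j}) = eps k (T - {j})) \<otimes> x j" by (simp only: bb)
        also have "... = c T j \<otimes> ksg R (eps k (T - {j}))" unfolding c_def by (rule ksg_m2[symmetric]) simp
        finally have "s \<otimes> c (insert k T) j = c T j \<otimes> ksg R (eps k (T - {j}))" .
        then show "s \<odot>\<^bsub>M\<^esub> (c (insert k T) j \<odot>\<^bsub>M\<^esub> \<phi> (insert k T - {j})) = c T j \<odot>\<^bsub>M\<^esub> comp1 R M I k \<phi> (T - {j})"
          using TjI carr by (simp add: comp1_def ins smult_assoc1[symmetric])
      qed simp
      have b3: "card {m\<in>insert k T. m < k} = card {m\<in>T. m < k}" using cl1[OF fT kT, of k] by simp
      have b4: "card {m\<in>T. m < k} + card {m\<in>T. k < m} = i" using cl3[OF fT kT] cT by simp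
      have e5: "s \<otimes> c (insert k T) k = ksg R (even i) \<otimes> x k"
      proof -
        have "(eps k T = even (card {m\<in>insert k T. m < k})) = even i"
          unfolding eps_def b3 using b4 by auto
        then show ?thesis unfolding s_def c_def by (simp add: ksg_m1)
      qed
      have "comp1 R M I k (kd R M x I i \<phi>) T = s \<odot>\<^bsub>M\<^esub> kd R M x I i \<phi> (insert k T)"
        using TI by (simp add: comp1_def s_def)
      also have "... = s \<odot>\<^bsub>M\<^esub> (c (insert k T) k \<odot>\<^bsub>M\<^esub> \<phi> T) \<oplus>\<^bsub>M\<^esub> s \<odot>\<^bsub>M\<^esub> (\<Oplus>\<^bsub>M\<^esub> j\<in>T. c (insert k T) j \<odot>\<^bsub>M\<^esub> \<phi> (insert k T - {j}))"
        unfolding e1 by (rule smult_r_distr) (use carr fT in \<open>auto intro!: M.finsum_closed\<close>)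
      also have "... = (ksg R (even i) \<otimes> x k) \<odot>\<^bsub>M\<^esub> \<phi> T \<oplus>\<^bsub>M\<^esub> (\<Oplus>\<^bsub>M\<^esub> j\<in>T. c T j \<odot>\<^bsub>M\<^esub> comp1 R M I k \<phi> (T - {j}))"
        unfolding e2 e4 using carr by (simp add: smult_assoc1[symmetric] e5)
      also have "... = (\<Oplus>\<^bsub>M\<^esub> j\<in>T. c T j \<odot>\<^bsub>M\<^esub> comp1 R M I k \<phi> (T - {j})) \<oplus>\<^bsub>M\<^esub> (ksg R (even i) \<otimes> x k) \<odot>\<^bsub>M\<^esub> \<phi> T"
        by (rule M.a_comm) (use carr cochs_carrier[OF comp1_cochs[OF \<phi>]] in \<open>auto intro!: M.finsum_closed\<close>)
      finally show ?thesis unfolding padd_def psm_def e3 using TI by (simp add: comp0_def)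
    qed
  qed
qed

end




context kz
begin

lemma padd_zc_l: "\<phi> \<in> cochs M I i \<Longrightarrow> padd M (zc M) \<phi> = \<phi>"
  using cochs_carrier by (auto simp: padd_def zc_def)
lemma padd_zc_r: "\<phi> \<in> cochs M I i \<Longrightarrow> padd M \<phi> (zc M) = \<phi>"
  using cochs_carrier by (auto simp: padd_def zc_def)
lemma psm_zc[simp]: "r \<in> carrier R \<Longrightarrow> psm M r (zc M) = zc M"
  by (auto simp: psm_def zc_def)
lemma padd_zc_zc[simp]: "padd M (zc M) (zc M) = zc M"
  by (auto simp: padd_def zc_def)
lemma padd_neg: "\<phi> \<in> cochs M I i \<Longrightarrow> padd M \<phi> (psm M (\<ominus> \<one>) \<phi>) = zc M"
  using cochs_carrier by (auto simp: padd_def psm_def zc_def fun_eq_iff smult_l_minus M.r_neg)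
lemma padd_comm: "\<phi> \<in> cochs M I i \<Longrightarrow> \<psi> \<in> cochs M I' i' \<Longrightarrow> padd M \<phi> \<psi> = padd M \<psi> \<phi>"
  using cochs_carrier by (auto simp: padd_def fun_eq_iff M.a_comm)
lemma padd_assoc: "\<phi> \<in> cochs M I i \<Longrightarrow> \<psi> \<in> cochs M I' i' \<Longrightarrow> \<chi> \<in> cochs M I'' i''
   \<Longrightarrow> padd M (padd M \<phi> \<psi>) \<chi> = padd M \<phi> (padd M \<psi> \<chi>)"
  using cochs_carrier by (auto simp: padd_def fun_eq_iff M.a_assoc)
lemma psm_psm: "r \<in> carrier R \<Longrightarrow> s \<in> carrier R \<Longrightarrow> \<phi> \<in> cochs M I i \<Longrightarrow> psm M r (psm M s \<phi>) = psm M (r \<otimes> s) \<phi>"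
  using cochs_carrier by (auto simp: psm_def fun_eq_iff smult_assoc1)
lemma psm_one: "\<phi> \<in> cochs M I i \<Longrightarrow> psm M \<one> \<phi> = \<phi>"
  using cochs_carrier by (auto simp: psm_def fun_eq_iff)
lemma psm_ldistr: "r \<in> carrier R \<Longrightarrow> s \<in> carrier R \<Longrightarrow> \<phi> \<in> cochs M I i \<Longrightarrow> psm M (r \<oplus> s) \<phi> = padd M (psm M r \<phi>) (psm M s \<phi>)"
  using cochs_carrier by (auto simp: psm_def padd_def fun_eq_iff smult_l_distr)
lemma psm_rdistr: "r \<in> carrier R \<Longrightarrow> \<phi> \<in> cochs M I i \<Longrightarrow> \<psi> \<in> cochs M I' i' \<Longrightarrow> psm M r (padd M \<phi> \<psi>) = padd M (psm M r \<phi>) (psm M r \<psi>)"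
  using cochs_carrier by (auto simp: psm_def padd_def fun_eq_iff smult_r_distr)

lemma diff_zero_eq:
  assumes "\<phi> \<in> cochs M I i" "\<psi> \<in> cochs M I' i'" "padd M \<phi> (psm M (\<ominus> \<one>) \<psi>) = zc M"
  shows "\<phi> = \<psi>"
proof
  fix T
  have "\<phi> T \<oplus>\<^bsub>M\<^esub> \<ominus>\<^bsub>M\<^esub> \<psi> T = \<zero>\<^bsub>M\<^esub>"
    using fun_cong[OF assms(3), of T] cochs_carrier[OF assms(2)] by (simp add: padd_def psm_def zc_def smult_l_minus)
  then show "\<phi> T = \<psi> T" using cochs_carrier[OF assms(1)] cochs_carrier[OF assms(2)]
    by (metis M.add.inv_closed M.add.inv_inv M.minus_equality)
qed

lemma diff_recover:
  assumes "\<phi> \<in> cochs M I i" "\<psi> \<in> cochs M I' i'" "\<theta> = padd M \<phi> (psm M (\<ominus> \<one>) \<psi>)"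
  shows "\<phi> = padd M \<psi> \<theta>"
proof
  fix T
  have a: "\<phi> T \<in> carrier M" "\<psi> T \<in> carrier M"
    using cochs_carrier[OF assms(1)] cochs_carrier[OF assms(2)] by auto
  have "\<psi> T \<oplus>\<^bsub>M\<^esub> (\<phi> T \<oplus>\<^bsub>M\<^esub> \<ominus>\<^bsub>M\<^esub> \<psi> T) = \<phi> T \<oplus>\<^bsub>M\<^esub> (\<psi> T \<oplus>\<^bsub>M\<^esub> \<ominus>\<^bsub>M\<^esub> \<psi> T)"
    using a by (simp add: M.a_lcomm)
  also have "... = \<phi> T" using a by (simp add: M.r_neg)
  finally show "\<phi> T = padd M \<psi> \<theta> T"
    using a by (simp add: assms(3) padd_def psm_def smult_l_minus)
qed

lemma kd_empty: "kd R M x {} i \<phi> = zc M"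
  by (auto simp: fun_eq_iff zc_def intro!: kd_out)

lemma acycD: "acyc R M x J n \<Longrightarrow> i < n \<Longrightarrow> \<alpha> \<in> cochs M J i \<Longrightarrow> kd R M x J i \<alpha> = zc M \<Longrightarrow> \<alpha> \<in> cob R M x J i"
  by (auto simp: acyc_def nz_def)

lemma acycI: "(\<And>i \<alpha>. i < n \<Longrightarrow> \<alpha> \<in> cochs M J i \<Longrightarrow> kd R M x J i \<alpha> = zc M \<Longrightarrow> \<alpha> \<in> cob R M x J i) \<Longrightarrow> acyc R M x J n"
  by (auto simp: acyc_def nz_def)

lemma cob0: "cob R M x J 0 = {zc M}" by (simp add: cob_def)
lemma cobS: "i \<noteq> 0 \<Longrightarrow> cob R M x J i = kd R M x J (i - 1) ` cochs M J (i - 1)" by (simp add: cob_def)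

end

lemma (in kz) dd_zero:
  assumes "finite I" "\<phi> \<in> cochs M I i"
  shows "kd R M x I (Suc i) (kd R M x I i \<phi>) = zc M"
  using assms
proof (induction I arbitrary: \<phi> i rule: finite_induct)
  case empty
  then show ?case by (simp add: kd_empty)
next
  case (insert k F)
  interpret C: kzc R M x "insert k F" k by unfold_locales (use insert in auto)
  have F: "insert k F - {k} = F" using insert by auto
  note \<phi> = insert.prems
  define c where "c = ksg R (even i) \<otimes> x k"
  have cc: "c \<in> carrier R" by (simp add: c_def)
  have c': "ksg R (even (Suc i)) \<otimes> x k = \<ominus> \<one> \<otimes> c"
  proof -
    have "\<ominus> \<one> = ksg R False" by (simp add: ksg_def)
    then show ?thesis by (simp add: c_def C.ksg_m1)
  qed
  have kdc: "kd R M x (insert k F) i \<phi> \<in> cochs M (insert k F) (Suc i)" using \<phi> by simp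
  have a0: "comp0 M (insert k F) k (kd R M x (insert k F) i \<phi>) = kd R M x F i (comp0 M (insert k F) k \<phi>)"
    using C.comp0_kd[OF \<phi>] F by simp
  have a1: "comp1 R M (insert k F) k (kd R M x (insert k F) i \<phi>) =
     padd M (kd R M x F (i - 1) (comp1 R M (insert k F) k \<phi>)) (psm M c (comp0 M (insert k F) k \<phi>))"
    using C.comp1_kd[OF \<phi>] F by (simp add: c_def)
  have p0: "comp0 M (insert k F) k \<phi> \<in> cochs M F i" using C.comp0_cochs[OF \<phi>] F by simp
  have p1: "comp1 R M (insert k F) k \<phi> \<in> cochs M F (i - 1)" using C.comp1_cochs[OF \<phi>] F by simp
  have dd1: "kd R M x F i (kd R M x F (i - 1) (comp1 R M (insert k F) k \<phi>)) = zc M"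
  proof (cases "i = 0")
    case True
    then show ?thesis using C.comp1_zero \<phi> by simp
  next
    case False
    then show ?thesis using insert.IH[OF p1] by simp
  qed
  let ?\<psi> = "kd R M x (insert k F) (Suc i) (kd R M x (insert k F) i \<phi>)"
  have \<psi>c: "?\<psi> \<in> cochs M (insert k F) (Suc (Suc i))" using kdc by simp
  show ?case
  proof (rule C.cochs_eq_comp[OF \<psi>c zc_cochs])
    show "comp0 M (insert k F) k ?\<psi> = comp0 M (insert k F) k (zc M)"
      using C.comp0_kd[OF kdc] F a0 insert.IH[OF p0] by simp
    have "comp1 R M (insert k F) k ?\<psi> = padd M (kd R M x F i (comp1 R M (insert k F) k (kd R M x (insert k F) i \<phi>)))
          (psm M (\<ominus> \<one> \<otimes> c) (comp0 M (insert k F) k (kd R M x (insert k F) i \<phi>)))"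
      using C.comp1_kd[OF kdc] F c' by simp
    also have "kd R M x F i (comp1 R M (insert k F) k (kd R M x (insert k F) i \<phi>)) = psm M c (kd R M x F i (comp0 M (insert k F) k \<phi>))"
    proof -
      have q: "kd R M x F (i - 1) (comp1 R M (insert k F) k \<phi>) \<in> cochs M F i"
      proof (cases "i = 0")
        case True
        then show ?thesis using C.comp1_zero \<phi> by simp
      next
        case False
        then show ?thesis using kd_cochs[OF p1] by simp
      qed
      show ?thesis unfolding a1 kd_padd[OF q psm_cochs[OF cc p0]] dd1 kd_psm[OF p0 cc]
        by (rule padd_zc_l[OF psm_cochs[OF cc kd_cochs[OF p0]]])
    qed
    also have "comp0 M (insert k F) k (kd R M x (insert k F) i \<phi>) = kd R M x F i (comp0 M (insert k F) k \<phi>)" by (rule a0)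
    also have "psm M (\<ominus> \<one> \<otimes> c) (kd R M x F i (comp0 M (insert k F) k \<phi>)) = psm M (\<ominus> \<one>) (psm M c (kd R M x F i (comp0 M (insert k F) k \<phi>)))"
      by (rule psm_psm[symmetric]) (use cc kd_cochs[OF p0] in auto)
    also have "padd M (psm M c (kd R M x F i (comp0 M (insert k F) k \<phi>))) (psm M (\<ominus> \<one>) (psm M c (kd R M x F i (comp0 M (insert k F) k \<phi>)))) = zc M"
      by (rule padd_neg[OF psm_cochs[OF cc kd_cochs[OF p0]]])
    finally show "comp1 R M (insert k F) k ?\<psi> = comp1 R M (insert k F) k (zc M)" by simp
  qed
qed





context kzc
begin

lemma acyc_mono:
  assumes A: "acyc R M x (I - {k}) n"
  shows "acyc R M x I n"
proof (rule acycI)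
  fix i \<phi> assume i: "i < n" and \<phi>: "\<phi> \<in> cochs M I i" and d\<phi>: "kd R M x I i \<phi> = zc M"
  let ?I' = "I - {k}"
  have p0: "comp0 M I k \<phi> \<in> cochs M ?I' i" using \<phi> by simp
  have "kd R M x ?I' i (comp0 M I k \<phi>) = zc M" using comp0_kd[OF \<phi>] d\<phi> by simp
  then have b0: "comp0 M I k \<phi> \<in> cob R M x ?I' i" using acycD[OF A i p0] by simp
  show "\<phi> \<in> cob R M x I i"
  proof (cases "i = 0")
    case True
    then have "comp0 M I k \<phi> = zc M" using b0 by (simp add: cob0)
    moreover have "comp1 R M I k \<phi> = zc M" using comp1_zero \<phi> True by simp
    ultimately have "\<phi> = zc M" using \<phi> by (intro cochs_eq_comp[OF \<phi> zc_cochs]) auto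
    then show ?thesis using True by (simp add: cob0)
  next
    case i0: False
    then obtain \<psi>0 where \<psi>0: "\<psi>0 \<in> cochs M ?I' (i - 1)" and e0: "comp0 M I k \<phi> = kd R M x ?I' (i - 1) \<psi>0"
      using b0 by (auto simp: cobS)
    define \<Psi> where "\<Psi> = bld R M I k \<psi>0 (zc M)"
    have \<Psi>: "\<Psi> \<in> cochs M I (i - 1)" unfolding \<Psi>_def by (rule bld_cochs) (use \<psi>0 in auto)
    have Si: "Suc (i - 1) = i" using i0 by simp
    have d\<Psi>: "kd R M x I (i - 1) \<Psi> \<in> cochs M I i" using kd_cochs[OF \<Psi>] Si by simp
    define \<theta> where "\<theta> = padd M \<phi> (psm M (\<ominus> \<one>) (kd R M x I (i - 1) \<Psi>))"
    have \<theta>: "\<theta> \<in> cochs M I i" unfolding \<theta>_def using \<phi> d\<Psi> by simp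
    have c0: "comp0 M I k \<theta> = zc M"
    proof -
      have "comp0 M I k (kd R M x I (i - 1) \<Psi>) = comp0 M I k \<phi>"
        using comp0_kd[OF \<Psi>] e0 \<psi>0 by (simp add: \<Psi>_def)
      then show ?thesis unfolding \<theta>_def comp0_padd comp0_psm[OF R.add.inv_closed[OF R.one_closed]]
        by (simp add: padd_neg[OF p0])
    qed
    have d\<theta>: "kd R M x I i \<theta> = zc M"
    proof -
      have "kd R M x I i (kd R M x I (i - 1) \<Psi>) = zc M" using dd_zero[OF finI \<Psi>] Si by simp
      then show ?thesis unfolding \<theta>_def
        using kd_padd[OF \<phi> psm_cochs[OF _ d\<Psi>]] kd_psm[OF d\<Psi>] d\<phi> by (simp add: padd_zc_l)
    qed
    have t1: "comp1 R M I k \<theta> \<in> cochs M ?I' (i - 1)" by (rule comp1_cochs[OF \<theta>])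
    have "comp1 R M I k (kd R M x I i \<theta>) = kd R M x ?I' (i - 1) (comp1 R M I k \<theta>)"
      unfolding comp1_kd[OF \<theta>] c0 psm_zc[OF R.m_closed[OF ksg_closed x_carr]] by (rule padd_zc_r[OF kd_cochs[OF t1]])
    then have "kd R M x ?I' (i - 1) (comp1 R M I k \<theta>) = zc M" using d\<theta> by simp
    then have b1: "comp1 R M I k \<theta> \<in> cob R M x ?I' (i - 1)" using acycD[OF A _ t1] i by simp
    show ?thesis
    proof (cases "i - 1 = 0")
      case True
      then have "comp1 R M I k \<theta> = zc M" using b1 by (simp add: cob0)
      then have "\<theta> = zc M" using c0 by (intro cochs_eq_comp[OF \<theta> zc_cochs]) auto
      then have "\<phi> = kd R M x I (i - 1) \<Psi>" using diff_zero_eq[OF \<phi> d\<Psi>] \<theta>_def by simp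
      then show ?thesis using i0 \<Psi> by (simp add: cobS)
    next
      case i1: False
      then obtain \<chi> where \<chi>: "\<chi> \<in> cochs M ?I' (i - 1 - 1)" and e1: "comp1 R M I k \<theta> = kd R M x ?I' (i - 1 - 1) \<chi>"
        using b1 by (auto simp: cobS)
      define \<Xi> where "\<Xi> = bld R M I k (zc M) \<chi>"
      have \<Xi>: "\<Xi> \<in> cochs M I (i - 1)" unfolding \<Xi>_def by (rule bld_cochs) (use \<chi> i1 in auto)
      have d\<Xi>: "kd R M x I (i - 1) \<Xi> \<in> cochs M I i" using kd_cochs[OF \<Xi>] Si by simp
      have "kd R M x I (i - 1) \<Xi> = \<theta>"
      proof (rule cochs_eq_comp[OF d\<Xi> \<theta>])
        show "comp0 M I k (kd R M x I (i - 1) \<Xi>) = comp0 M I k \<theta>"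
          unfolding comp0_kd[OF \<Xi>] c0 unfolding \<Xi>_def comp0_bld[OF zc_cochs] by simp
        show "comp1 R M I k (kd R M x I (i - 1) \<Xi>) = comp1 R M I k \<theta>"
          unfolding comp1_kd[OF \<Xi>] e1 unfolding \<Xi>_def comp1_bld[OF \<chi>] comp0_bld[OF zc_cochs] psm_zc[OF R.m_closed[OF ksg_closed x_carr]]
          by (rule padd_zc_r[OF kd_cochs[OF \<chi>]])
      qed
      then have "\<phi> = padd M (kd R M x I (i - 1) \<Psi>) (kd R M x I (i - 1) \<Xi>)"
        using diff_recover[OF \<phi> d\<Psi> \<theta>_def] by simp
      also have "... = kd R M x I (i - 1) (padd M \<Psi> \<Xi>)" using kd_padd[OF \<Psi> \<Xi>] by simp
      finally show ?thesis using i0 \<Psi> \<Xi> by (simp add: cobS)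
    qed
  qed
qed

end




context kz
begin

lemma padd_zero_neg:
  assumes "\<phi> \<in> cochs M I i" "\<psi> \<in> cochs M I' i'" "padd M \<phi> \<psi> = zc M"
  shows "\<phi> = psm M (\<ominus> \<one>) \<psi>"
proof (rule diff_zero_eq[OF assms(1) psm_cochs[OF _ assms(2)]])
  show "padd M \<phi> (psm M (\<ominus> \<one>) (psm M (\<ominus> \<one>) \<psi>)) = zc M"
    using assms(3) psm_psm[OF _ _ assms(2), of "\<ominus> \<one>" "\<ominus> \<one>"]
    by (simp add: R.l_minus R.r_minus psm_one[OF assms(2)])
qed simp

lemma zc_cob[simp]: "zc M \<in> cob R M x I i"
proof (cases "i = 0")
  case True then show ?thesis by (simp add: cob0)
next
  case False
  show ?thesis unfolding cobS[OF False] by (rule image_eqI[where x="zc M"]) simp_all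
qed

lemma cob_cochs: "\<phi> \<in> cob R M x I i \<Longrightarrow> \<phi> \<in> cochs M I i"
proof (cases "i = 0")
  case True then show "\<phi> \<in> cob R M x I i \<Longrightarrow> \<phi> \<in> cochs M I i" by (simp add: cob0)
next
  case False
  assume "\<phi> \<in> cob R M x I i"
  then obtain a where a: "a \<in> cochs M I (i - 1)" "\<phi> = kd R M x I (i - 1) a"
    using False by (auto simp: cobS)
  then show ?thesis using kd_cochs[OF a(1)] False by simp
qed

lemma cob_padd: "\<phi> \<in> cob R M x I i \<Longrightarrow> \<psi> \<in> cob R M x I i \<Longrightarrow> padd M \<phi> \<psi> \<in> cob R M x I i"
proof (cases "i = 0")
  case True
  then show "\<phi> \<in> cob R M x I i \<Longrightarrow> \<psi> \<in> cob R M x I i \<Longrightarrow> padd M \<phi> \<psi> \<in> cob R M x I i" by (simp add: cob0)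
next
  case False
  assume "\<phi> \<in> cob R M x I i" "\<psi> \<in> cob R M x I i"
  then obtain a b where a: "a \<in> cochs M I (i - 1)" "\<phi> = kd R M x I (i - 1) a"
    and b: "b \<in> cochs M I (i - 1)" "\<psi> = kd R M x I (i - 1) b" using False by (auto simp: cobS)
  then have "padd M \<phi> \<psi> = kd R M x I (i - 1) (padd M a b)" by (simp add: kd_padd)
  then show ?thesis using a b False by (simp add: cobS)
qed

lemma cob_psm: "r \<in> carrier R \<Longrightarrow> \<phi> \<in> cob R M x I i \<Longrightarrow> psm M r \<phi> \<in> cob R M x I i"
proof (cases "i = 0")
  case True
  then show "r \<in> carrier R \<Longrightarrow> \<phi> \<in> cob R M x I i \<Longrightarrow> psm M r \<phi> \<in> cob R M x I i" by (simp add: cob0)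
next
  case False
  assume r: "r \<in> carrier R" and "\<phi> \<in> cob R M x I i"
  then obtain a where a: "a \<in> cochs M I (i - 1)" "\<phi> = kd R M x I (i - 1) a"
    using False by (auto simp: cobS)
  then have "psm M r \<phi> = kd R M x I (i - 1) (psm M r a)" using r by (simp add: kd_psm)
  then show ?thesis using a r False by (simp add: cobS)
qed

end

context kzc
begin

lemma ann:
  assumes \<alpha>: "\<alpha> \<in> cochs M I i" and d\<alpha>: "kd R M x I i \<alpha> = zc M"
  shows "psm M (x k) \<alpha> \<in> cob R M x I i"
proof -
  let ?I' = "I - {k}"
  define c where "c = ksg R (even i) \<otimes> x k"
  have cc: "c \<in> carrier R" by (simp add: c_def)
  have a0: "comp0 M I k \<alpha> \<in> cochs M ?I' i" using \<alpha> by simp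
  have a1: "comp1 R M I k \<alpha> \<in> cochs M ?I' (i - 1)" by (rule comp1_cochs[OF \<alpha>])
  have eq: "padd M (kd R M x ?I' (i - 1) (comp1 R M I k \<alpha>)) (psm M c (comp0 M I k \<alpha>)) = zc M"
    using comp1_kd[OF \<alpha>] d\<alpha> by (simp add: c_def)
  have xa: "psm M (x k) \<alpha> \<in> cochs M I i" using \<alpha> by simp
  show ?thesis
  proof (cases "i = 0")
    case True
    then have "comp1 R M I k \<alpha> = zc M" using comp1_zero \<alpha> by simp
    then have "psm M c (comp0 M I k \<alpha>) = zc M" using eq padd_zc_l[OF psm_cochs[OF cc a0]] by simp
    then have z0: "psm M (x k) (comp0 M I k \<alpha>) = zc M" using True by (simp add: c_def)
    have "psm M (x k) \<alpha> = zc M"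
    proof (rule cochs_eq_comp[OF xa zc_cochs])
      show "comp0 M I k (psm M (x k) \<alpha>) = comp0 M I k (zc M)" using z0 by (simp add: comp0_psm)
      show "comp1 R M I k (psm M (x k) \<alpha>) = comp1 R M I k (zc M)"
        using comp1_psm[OF \<alpha>] \<open>comp1 R M I k \<alpha> = zc M\<close> by simp
    qed
    then show ?thesis by simp
  next
    case i0: False
    have kd1: "kd R M x ?I' (i - 1) (comp1 R M I k \<alpha>) \<in> cochs M ?I' i" using kd_cochs[OF a1] i0 by simp
    have e: "kd R M x ?I' (i - 1) (comp1 R M I k \<alpha>) = psm M (\<ominus> \<one>) (psm M c (comp0 M I k \<alpha>))"
      by (rule padd_zero_neg[OF kd1 psm_cochs[OF cc a0] eq])
    define s where "s = ksg R (\<not> even i)"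
    have sc: "s \<in> carrier R" by (simp add: s_def)
    have m1: "\<ominus> \<one> = ksg R False" by (simp add: ksg_def)
    have r1: "s \<otimes> (\<ominus> \<one> \<otimes> c) = x k" unfolding m1 s_def c_def by (simp add: ksg_m1)
    have r2: "(ksg R (even (i - 1)) \<otimes> x k) \<otimes> s = x k"
    proof -
      have "even (i - 1) = (\<not> even i)" using i0 by (cases i) auto
      then show ?thesis unfolding s_def by (simp add: ksg_m2)
    qed
    define \<gamma>0 where "\<gamma>0 = psm M s (comp1 R M I k \<alpha>)"
    have g0: "\<gamma>0 \<in> cochs M ?I' (i - 1)" unfolding \<gamma>0_def by (rule psm_cochs[OF sc a1])
    define \<gamma> where "\<gamma> = bld R M I k \<gamma>0 (zc M)"
    have g: "\<gamma> \<in> cochs M I (i - 1)" unfolding \<gamma>_def by (rule bld_cochs) (use g0 in auto)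
    have dg: "kd R M x I (i - 1) \<gamma> \<in> cochs M I i" using kd_cochs[OF g] i0 by simp
    have "kd R M x I (i - 1) \<gamma> = psm M (x k) \<alpha>"
    proof (rule cochs_eq_comp[OF dg xa])
      have "kd R M x ?I' (i - 1) \<gamma>0 = psm M (x k) (comp0 M I k \<alpha>)"
        unfolding \<gamma>0_def kd_psm[OF a1 sc] e
        using psm_psm[OF sc _ psm_cochs[OF cc a0], of "\<ominus> \<one>"] psm_psm[OF _ cc a0, of "s \<otimes> \<ominus> \<one>"] sc cc
        by (simp add: R.m_assoc r1)
      then show "comp0 M I k (kd R M x I (i - 1) \<gamma>) = comp0 M I k (psm M (x k) \<alpha>)"
        unfolding comp0_kd[OF g] comp0_psm[OF x_carr] unfolding \<gamma>_def comp0_bld[OF g0] .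
      have "comp1 R M I k (kd R M x I (i - 1) \<gamma>) = psm M (ksg R (even (i - 1)) \<otimes> x k) \<gamma>0"
        unfolding comp1_kd[OF g] unfolding \<gamma>_def comp0_bld[OF g0] comp1_bld[OF zc_cochs] kd_zc
        by (rule padd_zc_l[OF psm_cochs[OF R.m_closed[OF ksg_closed x_carr] g0]])
      also have "... = psm M (x k) (comp1 R M I k \<alpha>)"
        unfolding \<gamma>0_def using psm_psm[OF _ sc a1, of "ksg R (even (i - 1)) \<otimes> x k"] r2 by simp
      finally show "comp1 R M I k (kd R M x I (i - 1) \<gamma>) = comp1 R M I k (psm M (x k) \<alpha>)"
        using comp1_psm[OF \<alpha> x_carr] by simp
    qed
    then show ?thesis unfolding cobS[OF i0] using g by (intro image_eqI[where x=\<gamma>]) auto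
  qed
qed

end




lemma (in kz) ann_ideal:
  assumes finI: "finite I" and r: "r \<in> Idl (x ` I)"
    and \<alpha>: "\<alpha> \<in> cochs M I i" and d\<alpha>: "kd R M x I i \<alpha> = zc M"
  shows "psm M r \<alpha> \<in> cob R M x I i"
proof -
  define S where "S = {r \<in> carrier R. \<forall>i \<alpha>. \<alpha> \<in> cochs M I i \<longrightarrow> kd R M x I i \<alpha> = zc M \<longrightarrow> psm M r \<alpha> \<in> cob R M x I i}"
  have xS: "x ` I \<subseteq> S"
  proof
    fix y assume "y \<in> x ` I"
    then obtain k where k: "k \<in> I" "y = x k" by blast
    interpret C: kzc R M x I k by unfold_locales (use finI k in auto)
    show "y \<in> S" unfolding S_def using C.ann k by auto
  qed
  have SI: "ideal S R"
  proof (rule idealI)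
    show "ring R" by (rule R.ring_axioms)
    show "subgroup S (add_monoid R)"
    proof (rule R.add.subgroupI)
      show "S \<subseteq> carrier R" by (auto simp: S_def)
      show "S \<noteq> {}"
      proof -
        have "\<zero> \<in> S" unfolding S_def
          by (auto simp: psm_def zc_def[symmetric] cochs_carrier)
        then show ?thesis by blast
      qed
      fix a b assume a: "a \<in> S" and b: "b \<in> S"
      show "\<ominus> a \<in> S"
      proof -
        have ac: "a \<in> carrier R" using a by (simp add: S_def)
        have "\<ominus> a \<in> S" unfolding S_def
        proof (intro CollectI conjI allI impI)
          fix i \<alpha> assume \<alpha>: "\<alpha> \<in> cochs M I i" and "kd R M x I i \<alpha> = zc M"
          then have pa: "psm M a \<alpha> \<in> cob R M x I i" using a by (simp add: S_def)
          have "psm M (\<ominus> \<one>) (psm M a \<alpha>) \<in> cob R M x I i" by (rule cob_psm[OF _ pa]) simp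
          then show "psm M (\<ominus> a) \<alpha> \<in> cob R M x I i"
            using psm_psm[OF _ ac \<alpha>, of "\<ominus> \<one>"] ac by (simp add: R.l_minus)
        qed (use ac in simp)
        then show ?thesis by simp
      qed
      show "a \<oplus> b \<in> S"
      proof -
        have ac: "a \<in> carrier R" "b \<in> carrier R" using a b by (auto simp: S_def)
        have "a \<oplus> b \<in> S" unfolding S_def
        proof (intro CollectI conjI allI impI)
          fix i \<alpha> assume \<alpha>: "\<alpha> \<in> cochs M I i" and "kd R M x I i \<alpha> = zc M"
          then have "psm M a \<alpha> \<in> cob R M x I i" "psm M b \<alpha> \<in> cob R M x I i" using a b by (auto simp: S_def)
          then show "psm M (a \<oplus> b) \<alpha> \<in> cob R M x I i"
            using psm_ldistr[OF ac \<alpha>] cob_padd by simp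
        qed (use ac in simp)
        then show ?thesis by simp
      qed
    qed
    fix a t assume a: "a \<in> S" and t: "t \<in> carrier R"
    have ac: "a \<in> carrier R" using a by (simp add: S_def)
    have ta: "t \<otimes> a \<in> S" unfolding S_def
    proof (intro CollectI conjI allI impI)
      fix i \<alpha> assume \<alpha>: "\<alpha> \<in> cochs M I i" and "kd R M x I i \<alpha> = zc M"
      then have pa: "psm M a \<alpha> \<in> cob R M x I i" using a by (simp add: S_def)
      have "psm M t (psm M a \<alpha>) \<in> cob R M x I i" by (rule cob_psm[OF t pa])
      then show "psm M (t \<otimes> a) \<alpha> \<in> cob R M x I i" using psm_psm[OF t ac \<alpha>] by simp
    qed (use ac t in simp)
    then show "t \<otimes> a \<in> S" .
    show "a \<otimes> t \<in> S" using ta R.m_comm[OF ac t] by simp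
  qed
  have "Idl (x ` I) \<subseteq> S" by (rule R.genideal_minimal[OF SI xS])
  then show ?thesis using r \<alpha> d\<alpha> by (auto simp: S_def)
qed

context kzc
begin

lemma acyc_redundant:
  assumes red: "x k \<in> Idl (x ` (I - {k}))" and A: "acyc R M x I n"
  shows "acyc R M x (I - {k}) n"
proof (rule acycI)
  let ?I' = "I - {k}"
  fix i \<alpha> assume i: "i < n" and \<alpha>: "\<alpha> \<in> cochs M ?I' i" and d\<alpha>: "kd R M x ?I' i \<alpha> = zc M"
  have an: "psm M (x k) \<alpha> \<in> cob R M x ?I' i" by (rule ann_ideal[OF _ red \<alpha> d\<alpha>]) (use finI in simp)
  define c where "c = ksg R (even i)"
  have cc: "c \<in> carrier R" by (simp add: c_def)
  show "\<alpha> \<in> cob R M x ?I' i"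
  proof (cases "i = 0")
    case True
    then have z: "psm M (x k) \<alpha> = zc M" using an by (simp add: cob0)
    define \<phi> where "\<phi> = bld R M I k \<alpha> (zc M)"
    have \<phi>: "\<phi> \<in> cochs M I i" unfolding \<phi>_def by (rule bld_cochs) (use \<alpha> in auto)
    have "kd R M x I i \<phi> = zc M"
    proof (rule cochs_eq_comp[OF kd_cochs[OF \<phi>] zc_cochs])
      show "comp0 M I k (kd R M x I i \<phi>) = comp0 M I k (zc M)"
        unfolding comp0_kd[OF \<phi>] unfolding \<phi>_def comp0_bld[OF \<alpha>] d\<alpha> by simp
      show "comp1 R M I k (kd R M x I i \<phi>) = comp1 R M I k (zc M)"
        unfolding comp1_kd[OF \<phi>] unfolding \<phi>_def comp0_bld[OF \<alpha>] comp1_bld[OF zc_cochs] kd_zc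
        using True z padd_zc_l[OF psm_cochs[OF x_carr \<alpha>]] by simp
    qed
    then have "\<phi> \<in> cob R M x I i" using acycD[OF A i \<phi>] by simp
    then have "\<phi> = zc M" using True by (simp add: cob0)
    then have "\<alpha> = zc M" using comp0_bld[OF \<alpha>, of "zc M"] \<phi>_def by simp
    then show ?thesis by simp
  next
    case i0: False
    then obtain h where h: "h \<in> cochs M ?I' (i - 1)" and eh: "psm M (x k) \<alpha> = kd R M x ?I' (i - 1) h"
      using an by (auto simp: cobS)
    define \<beta> where "\<beta> = psm M (\<ominus> c) h"
    have \<beta>: "\<beta> \<in> cochs M ?I' (i - 1)" unfolding \<beta>_def using h cc by simp
    define \<phi> where "\<phi> = bld R M I k \<alpha> \<beta>"
    have \<phi>: "\<phi> \<in> cochs M I i" unfolding \<phi>_def by (rule bld_cochs) (use \<alpha> \<beta> i0 in auto)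
    have "kd R M x I i \<phi> = zc M"
    proof (rule cochs_eq_comp[OF kd_cochs[OF \<phi>] zc_cochs])
      show "comp0 M I k (kd R M x I i \<phi>) = comp0 M I k (zc M)"
        unfolding comp0_kd[OF \<phi>] unfolding \<phi>_def comp0_bld[OF \<alpha>] d\<alpha> by simp
      have xa: "psm M (x k) \<alpha> \<in> cochs M ?I' i" using \<alpha> by simp
      have "kd R M x ?I' (i - 1) \<beta> = psm M (\<ominus> c) (psm M (x k) \<alpha>)"
        unfolding \<beta>_def eh by (rule kd_psm[OF h]) (use cc in simp)
      also have "... = psm M (\<ominus> \<one>) (psm M (c \<otimes> x k) \<alpha>)"
        using psm_psm[OF _ _ \<alpha>, of "\<ominus> c" "x k"] psm_psm[OF _ _ \<alpha>, of "\<ominus> \<one>" "c \<otimes> x k"] cc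
        by (simp add: R.l_minus R.m_assoc)
      finally have e: "kd R M x ?I' (i - 1) \<beta> = psm M (\<ominus> \<one>) (psm M (c \<otimes> x k) \<alpha>)" .
      show "comp1 R M I k (kd R M x I i \<phi>) = comp1 R M I k (zc M)"
        unfolding comp1_kd[OF \<phi>] unfolding \<phi>_def comp0_bld[OF \<alpha>] comp1_bld[OF \<beta>] e
        using padd_comm[OF psm_cochs[OF _ psm_cochs[OF _ \<alpha>]] psm_cochs[OF _ \<alpha>], of "\<ominus> \<one>" "c \<otimes> x k" "c \<otimes> x k"]
          padd_neg[OF psm_cochs[OF _ \<alpha>], of "c \<otimes> x k"] cc
        by (simp add: c_def)
    qed
    then have "\<phi> \<in> cob R M x I i" using acycD[OF A i \<phi>] by simp
    then obtain \<psi> where \<psi>: "\<psi> \<in> cochs M I (i - 1)" and e\<psi>: "\<phi> = kd R M x I (i - 1) \<psi>"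
      using i0 by (auto simp: cobS)
    have "\<alpha> = comp0 M I k \<phi>" using comp0_bld[OF \<alpha>] \<phi>_def by simp
    also have "... = kd R M x ?I' (i - 1) (comp0 M I k \<psi>)" unfolding e\<psi> by (rule comp0_kd[OF \<psi>])
    finally show ?thesis unfolding cobS[OF i0] using comp0_cochs[OF \<psi>]
      by (intro image_eqI[where x="comp0 M I k \<psi>"]) auto
  qed
qed

end




definition pullc :: "('a,'m,'d) module_scheme \<Rightarrow> (nat \<Rightarrow> nat) \<Rightarrow> nat set \<Rightarrow> (nat set \<Rightarrow> 'm) \<Rightarrow> nat set \<Rightarrow> 'm" where
  "pullc M h I \<phi> = (\<lambda>T. if T \<subseteq> I then \<phi> (h ` T) else \<zero>\<^bsub>M\<^esub>)"
definition pushc :: "('a,'m,'d) module_scheme \<Rightarrow> (nat \<Rightarrow> nat) \<Rightarrow> nat set \<Rightarrow> (nat set \<Rightarrow> 'm) \<Rightarrow> nat set \<Rightarrow> 'm" where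
  "pushc M h I \<psi> = (\<lambda>S. if S \<subseteq> h ` I then \<psi> (I \<inter> h -` S) else \<zero>\<^bsub>M\<^esub>)"

locale kzh = kz + fixes h :: "nat \<Rightarrow> nat" and I :: "nat set"
  assumes smo: "strict_mono_on I h"
begin

sublocale Y: kz R M "\<lambda>j. x (h j)" by unfold_locales simp

lemma injh: "inj_on h I" by (rule strict_mono_on_imp_inj_on[OF smo])

lemma card_img: "T \<subseteq> I \<Longrightarrow> card (h ` T) = card T"
  using injh by (meson card_image inj_on_subset)

lemma pre_img: "T \<subseteq> I \<Longrightarrow> I \<inter> h -` (h ` T) = T"
  using injh by (auto simp: inj_on_def)

lemma img_pre: "S \<subseteq> h ` I \<Longrightarrow> h ` (I \<inter> h -` S) = S"
  by auto

lemma pullc_cochs: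
  assumes \<phi>: "\<phi> \<in> cochs M (h ` I) i" shows "pullc M h I \<phi> \<in> cochs M I i"
  unfolding cochs_def
proof (intro CollectI allI conjI impI)
  fix T show "pullc M h I \<phi> T \<in> carrier M" using cochs_carrier[OF \<phi>] by (simp add: pullc_def)
  assume a: "\<not> (T \<subseteq> I \<and> card T = i)"
  show "pullc M h I \<phi> T = \<zero>\<^bsub>M\<^esub>"
  proof (cases "T \<subseteq> I")
    case True
    then have "card (h ` T) \<noteq> i" using a card_img by simp
    then show ?thesis using True cochsD2[OF \<phi>] by (simp add: pullc_def)
  qed (simp add: pullc_def)
qed

lemma pushc_cochs:
  assumes "\<psi> \<in> cochs M I i" shows "pushc M h I \<psi> \<in> cochs M (h ` I) i"
proof -
  have c: "card S = card (I \<inter> h -` S)" if "S \<subseteq> h ` I" for S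
    using card_img[of "I \<inter> h -` S"] img_pre[OF that] by simp
  show ?thesis unfolding cochs_def
  proof (intro CollectI allI conjI impI)
    fix S show "pushc M h I \<psi> S \<in> carrier M" using cochs_carrier[OF assms] by (simp add: pushc_def)
    assume a: "\<not> (S \<subseteq> h ` I \<and> card S = i)"
    show "pushc M h I \<psi> S = \<zero>\<^bsub>M\<^esub>"
    proof (cases "S \<subseteq> h ` I")
      case True
      then have "card (I \<inter> h -` S) \<noteq> i" using a c by simp
      then show ?thesis using True cochsD2[OF assms, of "I \<inter> h -` S"] by (simp add: pushc_def)
    qed (simp add: pushc_def)
  qed
qed

lemma pull_push:
  assumes \<psi>: "\<psi> \<in> cochs M I i" shows "pullc M h I (pushc M h I \<psi>) = \<psi>"
proof
  fix T show "pullc M h I (pushc M h I \<psi>) T = \<psi> T"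
  proof (cases "T \<subseteq> I")
    case True
    then have "h ` T \<subseteq> h ` I" by blast
    then show ?thesis using True by (simp add: pullc_def pushc_def pre_img)
  next
    case False
    then show ?thesis using cochsD2[OF \<psi>, of T] by (simp add: pullc_def)
  qed
qed

lemma push_pull:
  assumes \<phi>: "\<phi> \<in> cochs M (h ` I) i" shows "pushc M h I (pullc M h I \<phi>) = \<phi>"
proof
  fix S show "pushc M h I (pullc M h I \<phi>) S = \<phi> S"
  proof (cases "S \<subseteq> h ` I")
    case True
    have "I \<inter> h -` S \<subseteq> I" by blast
    then show ?thesis using True by (simp add: pullc_def pushc_def img_pre)
  next
    case False
    then show ?thesis using cochsD2[OF \<phi>, of S] by (simp add: pushc_def)
  qed
qed

lemma pull_zc[simp]: "pullc M h I (zc M) = zc M" by (auto simp: pullc_def zc_def)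
lemma push_zc[simp]: "pushc M h I (zc M) = zc M" by (auto simp: pushc_def zc_def)

lemma pull_kd:
  assumes \<phi>: "\<phi> \<in> cochs M (h ` I) i"
  shows "pullc M h I (kd R M x (h ` I) i \<phi>) = kd R M (\<lambda>j. x (h j)) I i (pullc M h I \<phi>)"
proof
  fix T
  show "pullc M h I (kd R M x (h ` I) i \<phi>) T = kd R M (\<lambda>j. x (h j)) I i (pullc M h I \<phi>) T"
  proof (cases "T \<subseteq> I \<and> card T = Suc i")
    case True
    then have TI: "T \<subseteq> I" and cT: "card T = Suc i" by auto
    have ij: "inj_on h T" using injh TI inj_on_subset by blast
    have "kd R M x (h ` I) i \<phi> (h ` T) = (\<Oplus>\<^bsub>M\<^esub> j\<in>h ` T. (ksg R (even (card {m\<in>h ` T. m < j})) \<otimes> x j) \<odot>\<^bsub>M\<^esub> \<phi> (h ` T - {j}))"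
      by (rule kd_in) (use TI cT card_img[OF TI] in \<open>simp_all add: image_mono\<close>)
    also have "... = (\<Oplus>\<^bsub>M\<^esub> j\<in>T. (ksg R (even (card {m\<in>h ` T. m < h j})) \<otimes> x (h j)) \<odot>\<^bsub>M\<^esub> \<phi> (h ` T - {h j}))"
      by (rule M.finsum_reindex[OF _ ij]) (simp add: Pi_def cochs_carrier[OF \<phi>])
    also have "... = (\<Oplus>\<^bsub>M\<^esub> j\<in>T. (ksg R (even (card {m\<in>T. m < j})) \<otimes> x (h j)) \<odot>\<^bsub>M\<^esub> pullc M h I \<phi> (T - {j}))"
    proof (rule M.finsum_cong')
      fix j assume jT: "j \<in> T"
      have s1: "{m\<in>h ` T. m < h j} = h ` {m\<in>T. m < j}"
      proof (rule Set.set_eqI)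
        fix y show "y \<in> {m\<in>h ` T. m < h j} \<longleftrightarrow> y \<in> h ` {m\<in>T. m < j}"
        proof
          assume "y \<in> {m\<in>h ` T. m < h j}"
          then obtain z where z: "z \<in> T" "y = h z" "h z < h j" by blast
          have zI: "z \<in> I" "j \<in> I" using z(1) jT TI by (auto simp: subset_iff)
          then have "z < j" using strict_mono_on_less[OF smo zI] z(3) by simp
          then show "y \<in> h ` {m\<in>T. m < j}" using z by blast
        next
          assume "y \<in> h ` {m\<in>T. m < j}"
          then obtain z where z: "z \<in> T" "y = h z" "z < j" by blast
          have zI: "z \<in> I" "j \<in> I" using z(1) jT TI by (auto simp: subset_iff)
          then have "h z < h j" using strict_mono_on_less[OF smo zI] z(3) by simp
          then show "y \<in> {m\<in>h ` T. m < h j}" using z by blast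
        qed
      qed
      have "card {m\<in>h ` T. m < h j} = card {m\<in>T. m < j}"
        unfolding s1 by (rule card_image[OF inj_on_subset[OF ij]]) blast
      moreover have "h ` T - {h j} = h ` (T - {j})"
        using inj_on_image_set_diff[OF ij, of T "{j}"] jT by simp
      moreover have "T - {j} \<subseteq> I" using TI by blast
      ultimately show "(ksg R (even (card {m\<in>h ` T. m < h j})) \<otimes> x (h j)) \<odot>\<^bsub>M\<^esub> \<phi> (h ` T - {h j})
         = (ksg R (even (card {m\<in>T. m < j})) \<otimes> x (h j)) \<odot>\<^bsub>M\<^esub> pullc M h I \<phi> (T - {j})"
        by (simp add: pullc_def)
    qed (simp_all add: Pi_def cochs_carrier[OF pullc_cochs[OF \<phi>]])
    also have "... = kd R M (\<lambda>j. x (h j)) I i (pullc M h I \<phi>) T"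
      using TI cT by (simp add: kd_in)
    finally show ?thesis using TI by (simp add: pullc_def)
  next
    case False
    show ?thesis
    proof (cases "T \<subseteq> I")
      case True
      then have "card (h ` T) \<noteq> Suc i" using False card_img by simp
      then have "kd R M x (h ` I) i \<phi> (h ` T) = \<zero>\<^bsub>M\<^esub>" by (intro kd_out) simp
      then show ?thesis using True False by (simp add: pullc_def kd_out)
    next
      case F2: False
      then show ?thesis using False by (simp add: pullc_def kd_out)
    qed
  qed
qed

lemma push_kd:
  assumes \<psi>: "\<psi> \<in> cochs M I i"
  shows "pushc M h I (kd R M (\<lambda>j. x (h j)) I i \<psi>) = kd R M x (h ` I) i (pushc M h I \<psi>)"
proof -
  have p: "pushc M h I \<psi> \<in> cochs M (h ` I) i" by (rule pushc_cochs[OF \<psi>])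
  have "kd R M (\<lambda>j. x (h j)) I i \<psi> = pullc M h I (kd R M x (h ` I) i (pushc M h I \<psi>))"
    using pull_kd[OF p] pull_push[OF \<psi>] by simp
  then show ?thesis using push_pull[OF kd_cochs[OF p]] by simp
qed

lemma nz_reindex: "nz R M x (h ` I) i \<longleftrightarrow> nz R M (\<lambda>j. x (h j)) I i"
proof
  assume "nz R M x (h ` I) i"
  then obtain \<phi> where \<phi>: "\<phi> \<in> cochs M (h ` I) i" and d: "kd R M x (h ` I) i \<phi> = zc M"
    and nc: "\<phi> \<notin> cob R M x (h ` I) i" by (auto simp: nz_def)
  have p: "pullc M h I \<phi> \<in> cochs M I i" by (rule pullc_cochs[OF \<phi>])
  have dp: "kd R M (\<lambda>j. x (h j)) I i (pullc M h I \<phi>) = zc M" using pull_kd[OF \<phi>] d by simp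
  have "pullc M h I \<phi> \<notin> cob R M (\<lambda>j. x (h j)) I i"
  proof
    assume b: "pullc M h I \<phi> \<in> cob R M (\<lambda>j. x (h j)) I i"
    show False
    proof (cases "i = 0")
      case True
      then have "pullc M h I \<phi> = zc M" using b True by (simp add: Y.cob0)
      then have "\<phi> = zc M" using push_pull[OF \<phi>] by simp
      then show False using nc by simp
    next
      case False
      then obtain \<psi> where \<psi>: "\<psi> \<in> cochs M I (i - 1)" and e: "pullc M h I \<phi> = kd R M (\<lambda>j. x (h j)) I (i - 1) \<psi>"
        using b by (auto simp: Y.cobS)
      have "\<phi> = kd R M x (h ` I) (i - 1) (pushc M h I \<psi>)"
        using push_pull[OF \<phi>] e push_kd[OF \<psi>] by simp
      then have "\<phi> \<in> cob R M x (h ` I) i" unfolding cobS[OF False]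
        using pushc_cochs[OF \<psi>] by (intro image_eqI) auto
      then show False using nc by simp
    qed
  qed
  then show "nz R M (\<lambda>j. x (h j)) I i" using p dp by (auto simp: nz_def)
next
  assume "nz R M (\<lambda>j. x (h j)) I i"
  then obtain \<psi> where \<psi>: "\<psi> \<in> cochs M I i" and d: "kd R M (\<lambda>j. x (h j)) I i \<psi> = zc M"
    and nc: "\<psi> \<notin> cob R M (\<lambda>j. x (h j)) I i" by (auto simp: nz_def)
  have p: "pushc M h I \<psi> \<in> cochs M (h ` I) i" by (rule pushc_cochs[OF \<psi>])
  have dp: "kd R M x (h ` I) i (pushc M h I \<psi>) = zc M" using push_kd[OF \<psi>] d by simp
  have "pushc M h I \<psi> \<notin> cob R M x (h ` I) i"
  proof
    assume b: "pushc M h I \<psi> \<in> cob R M x (h ` I) i"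
    show False
    proof (cases "i = 0")
      case True
      then have "pushc M h I \<psi> = zc M" using b True by (simp add: cob0)
      then have "\<psi> = zc M" using pull_push[OF \<psi>] by simp
      then show False using nc by simp
    next
      case False
      then obtain \<phi> where \<phi>: "\<phi> \<in> cochs M (h ` I) (i - 1)" and e: "pushc M h I \<psi> = kd R M x (h ` I) (i - 1) \<phi>"
        using b by (auto simp: cobS)
      have "\<psi> = kd R M (\<lambda>j. x (h j)) I (i - 1) (pullc M h I \<phi>)"
        using pull_push[OF \<psi>] e pull_kd[OF \<phi>] by simp
      then have "\<psi> \<in> cob R M (\<lambda>j. x (h j)) I i" unfolding Y.cobS[OF False]
        using pullc_cochs[OF \<phi>] by (intro image_eqI) auto
      then show False using nc by simp
    qed
  qed
  then show "nz R M x (h ` I) i" using p dp by (auto simp: nz_def)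
qed

lemma acyc_reindex: "acyc R M x (h ` I) n \<longleftrightarrow> acyc R M (\<lambda>j. x (h j)) I n"
  by (simp add: acyc_def nz_reindex)

end




definition lext :: "('a,'c) ring_scheme \<Rightarrow> 'a list \<Rightarrow> nat \<Rightarrow> 'a" where
  "lext R xs = (\<lambda>j. if j < length xs then xs ! j else \<zero>\<^bsub>R\<^esub>)"

definition KG where "KG R M x I = (INF i \<in> {i. nz R M x I i}. enat i)"

lemma enat_le_INF: "enat n \<le> (INF i \<in> {i. P i}. enat i) \<longleftrightarrow> (\<forall>i<n. \<not> P i)"
  by (auto simp: le_INF_iff; metis not_le)

lemma enat_le_by_nat: "(\<And>n. enat n \<le> a \<Longrightarrow> enat n \<le> b) \<Longrightarrow> (a::enat) \<le> b"
proof (cases a)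
  case (enat m)
  assume "\<And>n. enat n \<le> a \<Longrightarrow> enat n \<le> b"
  then show ?thesis using enat by simp
next
  case infinity
  assume h: "\<And>n. enat n \<le> a \<Longrightarrow> enat n \<le> b"
  have "b = \<infinity>"
  proof (cases b)
    case (enat m)
    then have "enat (Suc m) \<le> b" using h infinity by simp
    then show ?thesis using enat by simp
  qed simp
  then show ?thesis by simp
qed

lemma KG_acyc: "enat n \<le> KG R M x I \<longleftrightarrow> acyc R M x I n"
  unfolding KG_def acyc_def by (rule enat_le_INF)

lemma KG_le: "(\<And>n. acyc R M x I n \<Longrightarrow> acyc R M y J n) \<Longrightarrow> KG R M x I \<le> KG R M y J"
  by (rule enat_le_by_nat) (simp add: KG_acyc)

context kz
begin

lemma nz_cong:
  assumes "\<And>j. j \<in> I \<Longrightarrow> x j = y j"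
  shows "nz R M y I i = nz R M x I i"
proof -
  have kc: "kd R M y I i' \<phi> = kd R M x I i' \<phi>" if "\<phi> \<in> cochs M I i'" for \<phi> i'
    using kd_cong[OF assms that] by simp
  have "cob R M y I i = cob R M x I i"
    by (cases "i = 0") (auto simp: cob_def kc image_def)
  then show ?thesis unfolding nz_def using kc by auto
qed

lemma acyc_cong:
  assumes "\<And>j. j \<in> I \<Longrightarrow> x j = y j"
  shows "acyc R M y I n = acyc R M x I n"
  unfolding acyc_def using nz_cong[OF assms] by simp

lemma acyc_mono_gen:
  assumes "finite D" "S \<inter> D = {}" "finite S" "acyc R M x S n"
  shows "acyc R M x (S \<union> D) n"
  using assms
proof (induction D rule: finite_induct)
  case empty then show ?case by simp
next
  case (insert k D)
  interpret C: kzc R M x "S \<union> insert k D" k by unfold_locales (use insert in auto)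
  have "S \<union> insert k D - {k} = S \<union> D" using insert by auto
  moreover have "acyc R M x (S \<union> D) n" using insert by auto
  ultimately show ?case using C.acyc_mono by simp
qed

lemma Idl_mono: "A \<subseteq> B \<Longrightarrow> B \<subseteq> carrier R \<Longrightarrow> Idl A \<subseteq> Idl B"
  by (meson R.genideal_ideal R.genideal_minimal R.genideal_self order_trans)

lemma acyc_red_gen:
  assumes "finite D" "S \<inter> D = {}" "finite S" "\<And>k. k \<in> D \<Longrightarrow> x k \<in> Idl (x ` S)" "acyc R M x (S \<union> D) n"
  shows "acyc R M x S n"
  using assms
proof (induction D rule: finite_induct)
  case empty then show ?case by simp
next
  case (insert k D)
  interpret C: kzc R M x "S \<union> insert k D" k by unfold_locales (use insert in auto)
  have e: "S \<union> insert k D - {k} = S \<union> D" using insert by auto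
  have "x k \<in> Idl (x ` S)" using insert by auto
  also have "... \<subseteq> Idl (x ` (S \<union> D))" by (rule Idl_mono) auto
  finally have "acyc R M x (S \<union> D) n" using C.acyc_redundant[of n] insert.prems e by simp
  then show ?case using insert by auto
qed

end

context module
begin

lemma koszul_eq:
  assumes xs: "set xs \<subseteq> carrier R" and \<phi>: "\<phi> \<in> cochs M {0..<length xs} i"
  shows "koszul_d R M xs i \<phi> = kd R M (lext R xs) {0..<length xs} i \<phi>"
proof -
  interpret X: kz R M "lext R xs" by unfold_locales (use xs in \<open>auto simp: lext_def\<close>)
  show ?thesis
  proof
    fix T
    show "koszul_d R M xs i \<phi> T = kd R M (lext R xs) {0..<length xs} i \<phi> T"
    proof (cases "T \<subseteq> {0..<length xs} \<and> card T = Suc i")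
      case True
      have "(\<Oplus>\<^bsub>M\<^esub> j\<in>T. (if even (card {k\<in>T. k < j}) then xs ! j else \<ominus> (xs ! j)) \<odot>\<^bsub>M\<^esub> \<phi> (T - {j}))
          = (\<Oplus>\<^bsub>M\<^esub> j\<in>T. (ksg R (even (card {k\<in>T. k < j})) \<otimes> lext R xs j) \<odot>\<^bsub>M\<^esub> \<phi> (T - {j}))"
      proof (rule M.finsum_cong')
        fix j assume j: "j \<in> T"
        then have jl: "j < length xs" using True by auto
        then have xj: "xs ! j \<in> carrier R" using xs by auto
        show "(if even (card {k\<in>T. k < j}) then xs ! j else \<ominus> (xs ! j)) \<odot>\<^bsub>M\<^esub> \<phi> (T - {j})
          = (ksg R (even (card {k\<in>T. k < j})) \<otimes> lext R xs j) \<odot>\<^bsub>M\<^esub> \<phi> (T - {j})"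
          using jl xj by (simp add: lext_def ksg_def R.l_minus)
      qed (use X.kd_term_closed[OF \<phi>] in simp_all)
      then show ?thesis using True by (simp add: koszul_d_def kd_in)
    next
      case False show ?thesis unfolding koszul_d_def if_not_P[OF False] kd_out[OF False] by simp
    qed
  qed
qed

lemma kgrade_gens_eq:
  assumes xs: "set xs \<subseteq> carrier R"
  shows "Kgrade_gens R xs M = KG R M (lext R xs) {0..<length xs}"
proof -
  have cc: "koszul_cochains M (length xs) = cochs M {0..<length xs}"
    by (auto simp: koszul_cochains_def cochs_def fun_eq_iff)
  have "koszul_cohom_nonzero R M xs i = nz R M (lext R xs) {0..<length xs} i" for i
  proof -
    have im: "koszul_d R M xs (i - 1) ` cochs M {0..<length xs} (i - 1)
       = kd R M (lext R xs) {0..<length xs} (i - 1) ` cochs M {0..<length xs} (i - 1)"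
      using koszul_eq[OF xs] by (auto simp: image_def)
    show ?thesis unfolding koszul_cohom_nonzero_def nz_def cob_def cc zc_def
      using koszul_eq[OF xs] im by (auto simp: zc_def)
  qed
  then have "koszul_cohom_nonzero R M xs = nz R M (lext R xs) {0..<length xs}" by (rule ext)
  then show ?thesis unfolding Kgrade_gens_def KG_def by simp
qed

end




context module
begin

lemma lext_app1: "j < length xs \<Longrightarrow> lext R (xs @ ys) j = lext R xs j"
  by (simp add: lext_def nth_append)
lemma lext_app2: "j < length ys \<Longrightarrow> lext R (xs @ ys) (j + length xs) = lext R ys j"
  by (simp add: lext_def nth_append)

lemma kg_prefix:
  assumes "set xs \<subseteq> carrier R" "set ys \<subseteq> carrier R"
  shows "Kgrade_gens R xs M \<le> Kgrade_gens R (xs @ ys) M"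
proof -
  interpret X: kz R M "lext R (xs @ ys)" by unfold_locales (use assms in \<open>auto simp: lext_def nth_append\<close>)
  have xy: "set (xs @ ys) \<subseteq> carrier R" using assms by auto
  show ?thesis unfolding kgrade_gens_eq[OF assms(1)] kgrade_gens_eq[OF xy]
  proof (rule KG_le)
    fix n assume "acyc R M (lext R xs) {0..<length xs} n"
    then have "acyc R M (lext R (xs @ ys)) {0..<length xs} n"
      using X.acyc_cong[of "{0..<length xs}" "lext R xs"] lext_app1 by simp
    then have "acyc R M (lext R (xs @ ys)) ({0..<length xs} \<union> {length xs..<length xs + length ys}) n"
      by (intro X.acyc_mono_gen) auto
    moreover have "{0..<length xs} \<union> {length xs..<length xs + length ys} = {0..<length (xs @ ys)}" by auto
    ultimately show "acyc R M (lext R (xs @ ys)) {0..<length (xs @ ys)} n" by simp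
  qed
qed

lemma shift_acyc:
  assumes "set xs \<subseteq> carrier R" "set ys \<subseteq> carrier R"
  shows "acyc R M (lext R (xs @ ys)) {length xs..<length xs + length ys} n \<longleftrightarrow> acyc R M (lext R ys) {0..<length ys} n"
proof -
  interpret H: kzh R M "lext R (xs @ ys)" "\<lambda>j. j + length xs" "{0..<length ys}"
    by unfold_locales (use assms in \<open>auto simp: lext_def nth_append strict_mono_on_def\<close>)
  have im: "(\<lambda>j. j + length xs) ` {0..<length ys} = {length xs..<length xs + length ys}"
  proof (rule Set.set_eqI)
    fix y show "y \<in> (\<lambda>j. j + length xs) ` {0..<length ys} \<longleftrightarrow> y \<in> {length xs..<length xs + length ys}"
    proof
      assume "y \<in> {length xs..<length xs + length ys}"
      then have "y = (y - length xs) + length xs" "y - length xs \<in> {0..<length ys}" by auto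
      then show "y \<in> (\<lambda>j. j + length xs) ` {0..<length ys}" by (rule image_eqI)
    qed auto
  qed
  have "acyc R M (lext R (xs @ ys)) {length xs..<length xs + length ys} n
     \<longleftrightarrow> acyc R M (\<lambda>j. lext R (xs @ ys) (j + length xs)) {0..<length ys} n"
    using H.acyc_reindex[of n] im by simp
  also have "... \<longleftrightarrow> acyc R M (lext R ys) {0..<length ys} n"
    using H.Y.acyc_cong[of "{0..<length ys}" "lext R ys" n] lext_app2 by simp
  finally show ?thesis .
qed

lemma kg_suffix:
  assumes "set xs \<subseteq> carrier R" "set ys \<subseteq> carrier R"
  shows "Kgrade_gens R ys M \<le> Kgrade_gens R (xs @ ys) M"
proof -
  interpret X: kz R M "lext R (xs @ ys)" by unfold_locales (use assms in \<open>auto simp: lext_def nth_append\<close>)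
  have xy: "set (xs @ ys) \<subseteq> carrier R" using assms by auto
  show ?thesis unfolding kgrade_gens_eq[OF assms(2)] kgrade_gens_eq[OF xy]
  proof (rule KG_le)
    fix n assume "acyc R M (lext R ys) {0..<length ys} n"
    then have "acyc R M (lext R (xs @ ys)) {length xs..<length xs + length ys} n"
      using shift_acyc[OF assms] by simp
    then have "acyc R M (lext R (xs @ ys)) ({length xs..<length xs + length ys} \<union> {0..<length xs}) n"
      by (intro X.acyc_mono_gen) auto
    moreover have "{length xs..<length xs + length ys} \<union> {0..<length xs} = {0..<length (xs @ ys)}" by auto
    ultimately show "acyc R M (lext R (xs @ ys)) {0..<length (xs @ ys)} n" by simp
  qed
qed

lemma kg_redundant:
  assumes "set xs \<subseteq> carrier R" "set ys \<subseteq> carrier R" "set xs \<subseteq> Idl (set ys)"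
  shows "Kgrade_gens R (xs @ ys) M \<le> Kgrade_gens R ys M"
proof -
  interpret X: kz R M "lext R (xs @ ys)" by unfold_locales (use assms in \<open>auto simp: lext_def nth_append\<close>)
  have img: "lext R (xs @ ys) ` {length xs..<length xs + length ys} = set ys"
  proof (rule Set.set_eqI)
    fix y show "y \<in> lext R (xs @ ys) ` {length xs..<length xs + length ys} \<longleftrightarrow> y \<in> set ys"
    proof
      assume "y \<in> lext R (xs @ ys) ` {length xs..<length xs + length ys}"
      then obtain j where j: "j \<in> {length xs..<length xs + length ys}" "y = lext R (xs @ ys) j" by blast
      then have "y = ys ! (j - length xs)" "j - length xs < length ys" by (auto simp: lext_def nth_append)
      then show "y \<in> set ys" by simp
    next
      assume "y \<in> set ys"
      then obtain j where j: "j < length ys" "y = ys ! j" by (auto simp: in_set_conv_nth)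
      then have "y = lext R (xs @ ys) (j + length xs)" by (simp add: lext_def nth_append)
      then show "y \<in> lext R (xs @ ys) ` {length xs..<length xs + length ys}" using j(1) by (intro image_eqI) auto
    qed
  qed
  have xy: "set (xs @ ys) \<subseteq> carrier R" using assms by auto
  show ?thesis unfolding kgrade_gens_eq[OF assms(2)] kgrade_gens_eq[OF xy]
  proof (rule KG_le)
    fix n assume a: "acyc R M (lext R (xs @ ys)) {0..<length (xs @ ys)} n"
    have "{length xs..<length xs + length ys} \<union> {0..<length xs} = {0..<length (xs @ ys)}" by auto
    then have "acyc R M (lext R (xs @ ys)) {length xs..<length xs + length ys} n"
    proof (intro X.acyc_red_gen[of "{0..<length xs}" "{length xs..<length xs + length ys}"])
      fix k assume "k \<in> {0..<length xs}"
      then have "lext R (xs @ ys) k = xs ! k" "k < length xs" by (auto simp: lext_def nth_append)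
      then show "lext R (xs @ ys) k \<in> Idl (lext R (xs @ ys) ` {length xs..<length xs + length ys})"
        unfolding img using assms(3) by (auto simp: subset_iff)
    qed (use a in auto)
    then show "acyc R M (lext R ys) {0..<length ys} n" using shift_acyc[OF assms(1,2)] by simp
  qed
qed

end




lemma finsum_self: "finsum (self_module Q) g T = finsum Q g T"
  by (simp add: finsum_def finprod_def self_module_def)

lemma self_simps[simp]: "carrier (self_module Q) = carrier Q"
  "x \<oplus>\<^bsub>self_module Q\<^esub> y = x \<oplus>\<^bsub>Q\<^esub> y" "\<zero>\<^bsub>self_module Q\<^esub> = \<zero>\<^bsub>Q\<^esub>"
  "x \<odot>\<^bsub>self_module Q\<^esub> y = x \<otimes>\<^bsub>Q\<^esub> y"
  by (simp_all add: self_module_def)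

lemma module_self:
  assumes "cring Q" shows "module Q (self_module Q)"
proof -
  interpret cring Q by fact
  show ?thesis
  proof (rule moduleI)
    show "cring Q" by fact
    show "abelian_group (self_module Q)"
    proof (rule abelian_groupI)
      fix x y z assume "x \<in> carrier (self_module Q)" "y \<in> carrier (self_module Q)" "z \<in> carrier (self_module Q)"
      then show "x \<oplus>\<^bsub>self_module Q\<^esub> y \<oplus>\<^bsub>self_module Q\<^esub> z = x \<oplus>\<^bsub>self_module Q\<^esub> (y \<oplus>\<^bsub>self_module Q\<^esub> z)"
        by (simp add: a_assoc)
    next
      fix x y assume "x \<in> carrier (self_module Q)" "y \<in> carrier (self_module Q)"
      then show "x \<oplus>\<^bsub>self_module Q\<^esub> y = y \<oplus>\<^bsub>self_module Q\<^esub> x" by (simp add: a_comm)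
    next
      fix x assume "x \<in> carrier (self_module Q)"
      then show "\<exists>y\<in>carrier (self_module Q). y \<oplus>\<^bsub>self_module Q\<^esub> x = \<zero>\<^bsub>self_module Q\<^esub>"
        by (intro bexI[of _ "\<ominus>\<^bsub>Q\<^esub> x"]) (simp_all add: l_neg)
    qed simp_all
  qed (auto simp: l_distr r_distr m_assoc)
qed

locale amal = ring_hom_cring A B f for A (structure) and B (structure) and f +
  fixes J assumes Jid: "ideal J B"
begin

sublocale JI: ideal J B by (rule Jid)

abbreviation "Rm \<equiv> amalgamation A B f J"
abbreviation "MJ \<equiv> ideal_module_via A B f J"

lemma Jc: "j \<in> J \<Longrightarrow> j \<in> carrier B" using JI.Icarr by blast

lemma MJ_simps[simp]: "carrier MJ = J" "x \<oplus>\<^bsub>MJ\<^esub> y = x \<oplus>\<^bsub>B\<^esub> y" "\<zero>\<^bsub>MJ\<^esub> = \<zero>\<^bsub>B\<^esub>"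
  "a \<odot>\<^bsub>MJ\<^esub> y = f a \<otimes>\<^bsub>B\<^esub> y"
  by (simp_all add: ideal_module_via_def)

lemma MJ_ag: "abelian_group MJ"
proof (rule abelian_groupI)
  fix x assume x: "x \<in> carrier MJ"
  show "\<exists>y\<in>carrier MJ. y \<oplus>\<^bsub>MJ\<^esub> x = \<zero>\<^bsub>MJ\<^esub>"
    using x Jc[of x] by (intro bexI[of _ "\<ominus>\<^bsub>B\<^esub> x"]) (auto simp: S.l_neg JI.a_inv_closed)
next
  fix x y z assume "x \<in> carrier MJ" "y \<in> carrier MJ" "z \<in> carrier MJ"
  then show "x \<oplus>\<^bsub>MJ\<^esub> y \<oplus>\<^bsub>MJ\<^esub> z = x \<oplus>\<^bsub>MJ\<^esub> (y \<oplus>\<^bsub>MJ\<^esub> z)" using Jc by (simp add: S.a_assoc)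
next
  fix x y assume "x \<in> carrier MJ" "y \<in> carrier MJ"
  then show "x \<oplus>\<^bsub>MJ\<^esub> y = y \<oplus>\<^bsub>MJ\<^esub> x" using Jc by (simp add: S.a_comm)
qed (auto simp: JI.a_closed Jc JI.additive_subgroup_axioms additive_subgroup.zero_closed)

lemma module_J: "module A MJ"
proof (rule moduleI)
  show "cring A" by (rule R.is_cring)
  show "abelian_group MJ" by (rule MJ_ag)
qed (auto simp: JI.I_l_closed Jc S.l_distr S.r_distr S.m_assoc)

lemma finsum_J:
  assumes "g \<in> T \<rightarrow> J"
  shows "finsum MJ g T = finsum B g T"
proof -
  interpret MJ: abelian_group MJ by (rule MJ_ag)
  show ?thesis using assms
  proof (induction T rule: infinite_finite_induct)
    case (infinite A) then show ?case by simp
  next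
    case empty then show ?case by simp
  next
    case (insert a F)
    have gF: "g \<in> F \<rightarrow> J" "g a \<in> J" using insert by auto
    have "finsum MJ g (insert a F) = g a \<oplus>\<^bsub>B\<^esub> finsum MJ g F"
      using MJ.finsum_insert[of F a g] insert gF by simp
    also have "... = g a \<oplus>\<^bsub>B\<^esub> finsum B g F" using insert gF by simp
    also have "... = finsum B g (insert a F)"
      using S.finsum_insert[of F a g] insert gF Jc by (auto simp: Pi_def)
    finally show ?case .
  qed
qed

lemma amal_carrier: "carrier Rm = {(a, f a \<oplus>\<^bsub>B\<^esub> j) | a j. a \<in> carrier A \<and> j \<in> J}"
  by (simp add: amalgamation_def)

lemma amal_simps[simp]: "x \<oplus>\<^bsub>Rm\<^esub> y = (fst x \<oplus>\<^bsub>A\<^esub> fst y, snd x \<oplus>\<^bsub>B\<^esub> snd y)"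
  "x \<otimes>\<^bsub>Rm\<^esub> y = (fst x \<otimes>\<^bsub>A\<^esub> fst y, snd x \<otimes>\<^bsub>B\<^esub> snd y)"
  "\<one>\<^bsub>Rm\<^esub> = (\<one>\<^bsub>A\<^esub>, \<one>\<^bsub>B\<^esub>)" "\<zero>\<^bsub>Rm\<^esub> = (\<zero>\<^bsub>A\<^esub>, \<zero>\<^bsub>B\<^esub>)"
  by (simp_all add: amalgamation_def)

lemma amal_mem: "p \<in> carrier Rm \<longleftrightarrow> fst p \<in> carrier A \<and> snd p \<in> carrier B \<and> snd p \<ominus>\<^bsub>B\<^esub> f (fst p) \<in> J"
proof
  assume "p \<in> carrier Rm"
  then obtain a j where p: "p = (a, f a \<oplus>\<^bsub>B\<^esub> j)" "a \<in> carrier A" "j \<in> J" by (auto simp: amal_carrier)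
  have "f a \<oplus>\<^bsub>B\<^esub> j \<ominus>\<^bsub>B\<^esub> f a = j" using p Jc[of j] by (simp add: a_minus_def S.a_comm S.a_lcomm S.r_neg)
  then show "fst p \<in> carrier A \<and> snd p \<in> carrier B \<and> snd p \<ominus>\<^bsub>B\<^esub> f (fst p) \<in> J" using p Jc by auto
next
  assume h: "fst p \<in> carrier A \<and> snd p \<in> carrier B \<and> snd p \<ominus>\<^bsub>B\<^esub> f (fst p) \<in> J"
  have "snd p = f (fst p) \<oplus>\<^bsub>B\<^esub> (snd p \<ominus>\<^bsub>B\<^esub> f (fst p))"
    using h by (simp add: a_minus_def S.a_lcomm S.r_neg)
  then have "p = (fst p, f (fst p) \<oplus>\<^bsub>B\<^esub> (snd p \<ominus>\<^bsub>B\<^esub> f (fst p)))" by (metis prod.collapse)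
  then show "p \<in> carrier Rm" using h unfolding amal_carrier by blast
qed

lemma amal_memI: "a \<in> carrier A \<Longrightarrow> j \<in> J \<Longrightarrow> (a, f a \<oplus>\<^bsub>B\<^esub> j) \<in> carrier Rm"
  by (auto simp: amal_carrier)

lemma amal_memE: "p \<in> carrier Rm \<Longrightarrow> fst p \<in> carrier A \<and> snd p \<in> carrier B"
  by (simp add: amal_mem)

lemma amal_cring: "cring Rm"
proof (rule cringI)
  show "abelian_group Rm"
  proof (rule abelian_groupI)
    fix x y assume x: "x \<in> carrier Rm" and y: "y \<in> carrier Rm"
    then obtain a j b k where xy: "x = (a, f a \<oplus>\<^bsub>B\<^esub> j)" "a \<in> carrier A" "j \<in> J"
      "y = (b, f b \<oplus>\<^bsub>B\<^esub> k)" "b \<in> carrier A" "k \<in> J" by (auto simp: amal_carrier)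
    have "(f a \<oplus>\<^bsub>B\<^esub> j) \<oplus>\<^bsub>B\<^esub> (f b \<oplus>\<^bsub>B\<^esub> k) = f (a \<oplus>\<^bsub>A\<^esub> b) \<oplus>\<^bsub>B\<^esub> (j \<oplus>\<^bsub>B\<^esub> k)"
      using xy Jc by (simp add: S.a_ac)
    then show "x \<oplus>\<^bsub>Rm\<^esub> y \<in> carrier Rm" using xy amal_memI[OF R.a_closed[OF xy(2) xy(5)] JI.a_closed[OF xy(3) xy(6)]]
      by simp
    show "x \<oplus>\<^bsub>Rm\<^esub> y = y \<oplus>\<^bsub>Rm\<^esub> x" using x y amal_memE by (simp add: R.a_comm S.a_comm)
  next
    show "\<zero>\<^bsub>Rm\<^esub> \<in> carrier Rm" using amal_memI[of "\<zero>\<^bsub>A\<^esub>" "\<zero>\<^bsub>B\<^esub>"]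
      by (simp add: JI.additive_subgroup_axioms additive_subgroup.zero_closed)
  next
    fix x y z assume "x \<in> carrier Rm" "y \<in> carrier Rm" "z \<in> carrier Rm"
    then show "x \<oplus>\<^bsub>Rm\<^esub> y \<oplus>\<^bsub>Rm\<^esub> z = x \<oplus>\<^bsub>Rm\<^esub> (y \<oplus>\<^bsub>Rm\<^esub> z)"
      using amal_memE by (simp add: R.a_assoc S.a_assoc)
  next
    fix x assume x: "x \<in> carrier Rm"
    then show "\<zero>\<^bsub>Rm\<^esub> \<oplus>\<^bsub>Rm\<^esub> x = x" using amal_memE by (simp add: prod_eq_iff)
    obtain a j where xa: "x = (a, f a \<oplus>\<^bsub>B\<^esub> j)" "a \<in> carrier A" "j \<in> J" using x by (auto simp: amal_carrier)
    have "(\<ominus>\<^bsub>A\<^esub> a, f (\<ominus>\<^bsub>A\<^esub> a) \<oplus>\<^bsub>B\<^esub> \<ominus>\<^bsub>B\<^esub> j) \<in> carrier Rm"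
      using xa by (intro amal_memI) (auto simp: JI.a_inv_closed)
    moreover have "(\<ominus>\<^bsub>A\<^esub> a, f (\<ominus>\<^bsub>A\<^esub> a) \<oplus>\<^bsub>B\<^esub> \<ominus>\<^bsub>B\<^esub> j) \<oplus>\<^bsub>Rm\<^esub> x = \<zero>\<^bsub>Rm\<^esub>"
      using xa Jc[of j] by (simp add: R.l_neg ring.hom_a_inv S.a_ac S.r_neg S.minus_add)
    ultimately show "\<exists>y\<in>carrier Rm. y \<oplus>\<^bsub>Rm\<^esub> x = \<zero>\<^bsub>Rm\<^esub>" by blast
  qed
next
  show "comm_monoid Rm"
  proof (rule comm_monoidI)
    fix x y assume x: "x \<in> carrier Rm" and y: "y \<in> carrier Rm"
    then obtain a j b k where xy: "x = (a, f a \<oplus>\<^bsub>B\<^esub> j)" "a \<in> carrier A" "j \<in> J"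
      "y = (b, f b \<oplus>\<^bsub>B\<^esub> k)" "b \<in> carrier A" "k \<in> J" by (auto simp: amal_carrier)
    have jc: "j \<in> carrier B" "k \<in> carrier B" using xy Jc by auto
    have "(f a \<oplus>\<^bsub>B\<^esub> j) \<otimes>\<^bsub>B\<^esub> (f b \<oplus>\<^bsub>B\<^esub> k) = f (a \<otimes>\<^bsub>A\<^esub> b) \<oplus>\<^bsub>B\<^esub> ((f a \<otimes>\<^bsub>B\<^esub> k \<oplus>\<^bsub>B\<^esub> j \<otimes>\<^bsub>B\<^esub> f b) \<oplus>\<^bsub>B\<^esub> j \<otimes>\<^bsub>B\<^esub> k)"
      using xy jc by (simp add: S.l_distr S.r_distr S.a_ac)
    moreover have "(f a \<otimes>\<^bsub>B\<^esub> k \<oplus>\<^bsub>B\<^esub> j \<otimes>\<^bsub>B\<^esub> f b) \<oplus>\<^bsub>B\<^esub> j \<otimes>\<^bsub>B\<^esub> k \<in> J"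
      using xy jc by (intro JI.a_closed JI.I_l_closed JI.I_r_closed) auto
    ultimately show "x \<otimes>\<^bsub>Rm\<^esub> y \<in> carrier Rm" using xy amal_memI[OF R.m_closed[OF xy(2) xy(5)]]
      by (simp del: hom_mult)
    show "x \<otimes>\<^bsub>Rm\<^esub> y = y \<otimes>\<^bsub>Rm\<^esub> x" using x y amal_memE by (simp add: R.m_comm S.m_comm)
  next
    show "\<one>\<^bsub>Rm\<^esub> \<in> carrier Rm" using amal_memI[of "\<one>\<^bsub>A\<^esub>" "\<zero>\<^bsub>B\<^esub>"]
      by (simp add: JI.additive_subgroup_axioms additive_subgroup.zero_closed)
  next
    fix x y z assume "x \<in> carrier Rm" "y \<in> carrier Rm" "z \<in> carrier Rm"
    then show "x \<otimes>\<^bsub>Rm\<^esub> y \<otimes>\<^bsub>Rm\<^esub> z = x \<otimes>\<^bsub>Rm\<^esub> (y \<otimes>\<^bsub>Rm\<^esub> z)"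
      using amal_memE by (simp add: R.m_assoc S.m_assoc)
  next
    fix x assume "x \<in> carrier Rm"
    then show "\<one>\<^bsub>Rm\<^esub> \<otimes>\<^bsub>Rm\<^esub> x = x" using amal_memE by (simp add: prod_eq_iff)
  qed
next
  fix x y z assume "x \<in> carrier Rm" "y \<in> carrier Rm" "z \<in> carrier Rm"
  then show "(x \<oplus>\<^bsub>Rm\<^esub> y) \<otimes>\<^bsub>Rm\<^esub> z = x \<otimes>\<^bsub>Rm\<^esub> z \<oplus>\<^bsub>Rm\<^esub> y \<otimes>\<^bsub>Rm\<^esub> z"
    using amal_memE by (simp add: R.l_distr S.l_distr)
qed

end




definition p1 :: "(nat set \<Rightarrow> 'a \<times> 'b) \<Rightarrow> nat set \<Rightarrow> 'a" where "p1 \<phi> = (\<lambda>T. fst (\<phi> T))"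
definition p2 :: "('b,'d) ring_scheme \<Rightarrow> ('a \<Rightarrow> 'b) \<Rightarrow> (nat set \<Rightarrow> 'a \<times> 'b) \<Rightarrow> nat set \<Rightarrow> 'b" where
  "p2 B f \<phi> = (\<lambda>T. snd (\<phi> T) \<ominus>\<^bsub>B\<^esub> f (fst (\<phi> T)))"
definition cmb :: "('b,'d) ring_scheme \<Rightarrow> ('a \<Rightarrow> 'b) \<Rightarrow> (nat set \<Rightarrow> 'a) \<Rightarrow> (nat set \<Rightarrow> 'b) \<Rightarrow> nat set \<Rightarrow> 'a \<times> 'b" where
  "cmb B f \<alpha> \<beta> = (\<lambda>T. (\<alpha> T, f (\<alpha> T) \<oplus>\<^bsub>B\<^esub> \<beta> T))"

locale amalx = amal + fixes x :: "nat \<Rightarrow> 'a" assumes xc[simp]: "x j \<in> carrier A"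
begin

abbreviation "SA \<equiv> self_module A"
abbreviation "SR \<equiv> self_module Rm"
abbreviation "xR \<equiv> (\<lambda>j. (x j, f (x j)))"

sublocale Rc: cring Rm by (rule amal_cring)

lemma iota_mem[simp]: "a \<in> carrier A \<Longrightarrow> (a, f a) \<in> carrier Rm"
  using amal_memI[of a "\<zero>\<^bsub>B\<^esub>"] by (simp add: JI.additive_subgroup_axioms additive_subgroup.zero_closed)


lemma J0[simp]: "\<zero>\<^bsub>B\<^esub> \<in> J"
  by (simp add: JI.additive_subgroup_axioms additive_subgroup.zero_closed)

lemma zero_Rm_mem[simp]: "(\<zero>\<^bsub>A\<^esub>, \<zero>\<^bsub>B\<^esub>) \<in> carrier Rm"
  using Rc.zero_closed by simp
lemma one_Rm_mem[simp]: "(\<one>\<^bsub>A\<^esub>, \<one>\<^bsub>B\<^esub>) \<in> carrier Rm"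
  using Rc.one_closed by simp

lemma Rm_neg:
  assumes p: "p \<in> carrier Rm" shows "\<ominus>\<^bsub>Rm\<^esub> p = (\<ominus>\<^bsub>A\<^esub> fst p, \<ominus>\<^bsub>B\<^esub> snd p)"
proof (rule Rc.minus_equality)
  have pc: "fst p \<in> carrier A" "snd p \<in> carrier B" "snd p \<ominus>\<^bsub>B\<^esub> f (fst p) \<in> J" using p by (auto simp: amal_mem)
  have "\<ominus>\<^bsub>B\<^esub> snd p \<ominus>\<^bsub>B\<^esub> f (\<ominus>\<^bsub>A\<^esub> fst p) = \<ominus>\<^bsub>B\<^esub> (snd p \<ominus>\<^bsub>B\<^esub> f (fst p))"
    using pc by (simp add: a_minus_def ring.hom_a_inv S.minus_add)
  then show "(\<ominus>\<^bsub>A\<^esub> fst p, \<ominus>\<^bsub>B\<^esub> snd p) \<in> carrier Rm"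
    using pc by (simp add: amal_mem JI.a_inv_closed)
  show "(\<ominus>\<^bsub>A\<^esub> fst p, \<ominus>\<^bsub>B\<^esub> snd p) \<oplus>\<^bsub>Rm\<^esub> p = \<zero>\<^bsub>Rm\<^esub>" using pc by (simp add: R.l_neg S.l_neg)
qed (rule p)

lemma ksg_Rm: "ksg Rm b = (ksg A b, f (ksg A b))"
  by (cases b) (simp_all add: ksg_def Rm_neg ring.hom_a_inv)

lemma finsum_Rm:
  assumes "g \<in> T \<rightarrow> carrier Rm"
  shows "finsum Rm g T = (finsum A (\<lambda>j. fst (g j)) T, finsum B (\<lambda>j. snd (g j)) T)"
  using assms
proof (induction T rule: infinite_finite_induct)
  case (infinite T) then show ?case by simp
next
  case empty then show ?case by simp
next
  case (insert a F)
  have gF: "g \<in> F \<rightarrow> carrier Rm" "g a \<in> carrier Rm" using insert by auto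
  then have g2: "(\<lambda>j. fst (g j)) \<in> F \<rightarrow> carrier A" "(\<lambda>j. snd (g j)) \<in> F \<rightarrow> carrier B"
    "fst (g a) \<in> carrier A" "snd (g a) \<in> carrier B" by (auto simp: Pi_def amal_mem)
  have "finsum Rm g (insert a F) = g a \<oplus>\<^bsub>Rm\<^esub> finsum Rm g F"
    using Rc.finsum_insert[of F a g] insert gF by simp
  also have "... = (finsum A (\<lambda>j. fst (g j)) (insert a F), finsum B (\<lambda>j. snd (g j)) (insert a F))"
    using insert gF g2 by (simp add: R.finsum_insert S.finsum_insert)
  finally show ?case .
qed

lemma cochs_SR_mem: "\<phi> \<in> cochs SR I i \<Longrightarrow> \<phi> T \<in> carrier Rm"
  by (cases "T \<subseteq> I \<and> card T = i") (auto simp: cochs_def)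

lemma p1_cochs: "\<phi> \<in> cochs SR I i \<Longrightarrow> p1 \<phi> \<in> cochs SA I i"
  unfolding cochs_def p1_def by (auto simp: amal_mem)

lemma p2_cochs: "\<phi> \<in> cochs SR I i \<Longrightarrow> p2 B f \<phi> \<in> cochs MJ I i"
  unfolding cochs_def p2_def by (auto simp: amal_mem)

lemma cmb_cochs: "\<alpha> \<in> cochs SA I i \<Longrightarrow> \<beta> \<in> cochs MJ I i \<Longrightarrow> cmb B f \<alpha> \<beta> \<in> cochs SR I i"
  unfolding cochs_def cmb_def by (auto intro: amal_memI)

lemma cmb_p: "\<phi> \<in> cochs SR I i \<Longrightarrow> cmb B f (p1 \<phi>) (p2 B f \<phi>) = \<phi>"
proof
  fix T assume "\<phi> \<in> cochs SR I i"
  then have m: "\<phi> T \<in> carrier Rm" by (rule cochs_SR_mem)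
  then have c: "fst (\<phi> T) \<in> carrier A" "snd (\<phi> T) \<in> carrier B" by (auto simp: amal_mem)
  have "f (fst (\<phi> T)) \<oplus>\<^bsub>B\<^esub> (snd (\<phi> T) \<ominus>\<^bsub>B\<^esub> f (fst (\<phi> T))) = snd (\<phi> T)"
    using c by (simp add: a_minus_def S.a_lcomm S.r_neg)
  then show "cmb B f (p1 \<phi>) (p2 B f \<phi>) T = \<phi> T" by (simp add: cmb_def p1_def p2_def prod_eq_iff)
qed

lemma p1_cmb: "p1 (cmb B f \<alpha> \<beta>) = \<alpha>" by (simp add: p1_def cmb_def)

lemma p2_cmb:
  assumes "\<alpha> \<in> cochs SA I i" "\<beta> \<in> cochs MJ I i" shows "p2 B f (cmb B f \<alpha> \<beta>) = \<beta>"
proof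
  fix T
  have "\<alpha> T \<in> carrier A" "\<beta> T \<in> J"
    using assms by (cases "T \<subseteq> I \<and> card T = i"; auto simp: cochs_def)+
  then show "p2 B f (cmb B f \<alpha> \<beta>) T = \<beta> T"
    using Jc by (simp add: p2_def cmb_def a_minus_def S.a_comm S.a_lcomm S.r_neg)
qed

lemma p1_zc[simp]: "p1 (zc SR) = zc SA" by (simp add: p1_def zc_def self_module_def)
lemma p2_zc[simp]: "p2 B f (zc SR) = zc MJ" by (simp add: p2_def zc_def self_module_def ideal_module_via_def a_minus_def)
lemma cmb_zc[simp]: "cmb B f (zc SA) (zc MJ) = zc SR" by (simp add: cmb_def zc_def self_module_def ideal_module_via_def)

end




context amalx
begin

sublocale KA: kz A SA x by (intro kz.intro module_self R.is_cring kz_axioms.intro xc)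
sublocale KJ: kz A MJ x by (intro kz.intro module_J kz_axioms.intro xc)
sublocale KR: kz Rm SR xR by (intro kz.intro module_self amal_cring kz_axioms.intro iota_mem xc)

lemma SA_carr: "\<alpha> \<in> cochs SA I i \<Longrightarrow> \<alpha> T \<in> carrier A"
  using KA.cochs_carrier by simp
lemma MJ_carr: "\<beta> \<in> cochs MJ I i \<Longrightarrow> \<beta> T \<in> J"
  using KJ.cochs_carrier by simp

lemma kd_cmb:
  assumes \<alpha>: "\<alpha> \<in> cochs SA I i" and \<beta>: "\<beta> \<in> cochs MJ I i"
  shows "kd Rm SR xR I i (cmb B f \<alpha> \<beta>) = cmb B f (kd A SA x I i \<alpha>) (kd A MJ x I i \<beta>)"
proof
  fix T
  show "kd Rm SR xR I i (cmb B f \<alpha> \<beta>) T = cmb B f (kd A SA x I i \<alpha>) (kd A MJ x I i \<beta>) T"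
  proof (cases "T \<subseteq> I \<and> card T = Suc i")
    case True
    define c where "c j = ksg A (even (card {k\<in>T. k < j})) \<otimes>\<^bsub>A\<^esub> x j" for j
    have cc[simp]: "c j \<in> carrier A" for j by (simp add: c_def)
    note ac = SA_carr[OF \<alpha>] and bc = MJ_carr[OF \<beta>]
    have bcB: "\<beta> T' \<in> carrier B" for T' using Jc bc by blast
    define g where "g j = (c j \<otimes>\<^bsub>A\<^esub> \<alpha> (T - {j}), f (c j) \<otimes>\<^bsub>B\<^esub> f (\<alpha> (T - {j})) \<oplus>\<^bsub>B\<^esub> f (c j) \<otimes>\<^bsub>B\<^esub> \<beta> (T - {j}))" for j
    have gc: "g \<in> T \<rightarrow> carrier Rm"
    proof
      fix j
      have "(c j \<otimes>\<^bsub>A\<^esub> \<alpha> (T - {j}), f (c j \<otimes>\<^bsub>A\<^esub> \<alpha> (T - {j})) \<oplus>\<^bsub>B\<^esub> f (c j) \<otimes>\<^bsub>B\<^esub> \<beta> (T - {j})) \<in> carrier Rm"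
        using ac bc by (intro amal_memI JI.I_l_closed) auto
      then show "g j \<in> carrier Rm" using ac by (simp add: g_def)
    qed
    have "kd Rm SR xR I i (cmb B f \<alpha> \<beta>) T = finsum Rm g T"
    proof -
      have "kd Rm SR xR I i (cmb B f \<alpha> \<beta>) T = (\<Oplus>\<^bsub>SR\<^esub> j\<in>T. (ksg Rm (even (card {k\<in>T. k < j})) \<otimes>\<^bsub>Rm\<^esub> xR j) \<odot>\<^bsub>SR\<^esub> cmb B f \<alpha> \<beta> (T - {j}))"
        using True by (simp add: KR.kd_in)
      also have "... = finsum Rm (\<lambda>j. (ksg Rm (even (card {k\<in>T. k < j})) \<otimes>\<^bsub>Rm\<^esub> xR j) \<otimes>\<^bsub>Rm\<^esub> cmb B f \<alpha> \<beta> (T - {j})) T"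
        by (simp add: finsum_self)
      also have "... = finsum Rm g T"
      proof (rule Rc.finsum_cong')
        fix j assume "j \<in> T"
        show "(ksg Rm (even (card {k\<in>T. k < j})) \<otimes>\<^bsub>Rm\<^esub> xR j) \<otimes>\<^bsub>Rm\<^esub> cmb B f \<alpha> \<beta> (T - {j}) = g j"
          using ac bcB by (simp add: ksg_Rm g_def c_def cmb_def S.r_distr)
      qed (use gc in auto)
      finally show ?thesis .
    qed
    also have "... = (finsum A (\<lambda>j. fst (g j)) T, finsum B (\<lambda>j. snd (g j)) T)" by (rule finsum_Rm[OF gc])
    also have "... = cmb B f (kd A SA x I i \<alpha>) (kd A MJ x I i \<beta>) T"
    proof -
      have k1: "kd A SA x I i \<alpha> T = finsum A (\<lambda>j. c j \<otimes>\<^bsub>A\<^esub> \<alpha> (T - {j})) T"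
        using True by (simp add: KA.kd_in finsum_self c_def)
      have k2: "kd A MJ x I i \<beta> T = finsum B (\<lambda>j. f (c j) \<otimes>\<^bsub>B\<^esub> \<beta> (T - {j})) T"
      proof -
        have "kd A MJ x I i \<beta> T = finsum MJ (\<lambda>j. f (c j) \<otimes>\<^bsub>B\<^esub> \<beta> (T - {j})) T"
          using True by (simp add: KJ.kd_in c_def)
        also have "... = finsum B (\<lambda>j. f (c j) \<otimes>\<^bsub>B\<^esub> \<beta> (T - {j})) T"
          by (rule finsum_J) (use bc in \<open>auto intro: JI.I_l_closed\<close>)
        finally show ?thesis .
      qed
      have hf: "f (finsum A (\<lambda>j. c j \<otimes>\<^bsub>A\<^esub> \<alpha> (T - {j})) T) = finsum B (\<lambda>j. f (c j) \<otimes>\<^bsub>B\<^esub> f (\<alpha> (T - {j}))) T"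
        using ac by (simp add: comp_def Pi_def)
      have "finsum B (\<lambda>j. snd (g j)) T = finsum B (\<lambda>j. f (c j) \<otimes>\<^bsub>B\<^esub> f (\<alpha> (T - {j}))) T \<oplus>\<^bsub>B\<^esub> finsum B (\<lambda>j. f (c j) \<otimes>\<^bsub>B\<^esub> \<beta> (T - {j})) T"
        unfolding g_def snd_conv by (rule S.finsum_addf) (use ac bcB in auto)
      then show ?thesis unfolding cmb_def k1 k2 hf g_def by simp
    qed
    finally show ?thesis .
  next
    case False
    then show ?thesis by (simp add: KR.kd_out KA.kd_out KJ.kd_out cmb_def)
  qed
qed

lemma kd_split:
  assumes "\<phi> \<in> cochs SR I i"
  shows "kd Rm SR xR I i \<phi> = cmb B f (kd A SA x I i (p1 \<phi>)) (kd A MJ x I i (p2 B f \<phi>))"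
proof -
  have "kd Rm SR xR I i \<phi> = kd Rm SR xR I i (cmb B f (p1 \<phi>) (p2 B f \<phi>))" by (simp only: cmb_p[OF assms])
  also have "... = cmb B f (kd A SA x I i (p1 \<phi>)) (kd A MJ x I i (p2 B f \<phi>))"
    by (rule kd_cmb[OF p1_cochs[OF assms] p2_cochs[OF assms]])
  finally show ?thesis .
qed

lemma kd_p1: "\<phi> \<in> cochs SR I i \<Longrightarrow> p1 (kd Rm SR xR I i \<phi>) = kd A SA x I i (p1 \<phi>)"
  by (simp only: kd_split p1_cmb)

lemma kd_p2: "\<phi> \<in> cochs SR I i \<Longrightarrow> p2 B f (kd Rm SR xR I i \<phi>) = kd A MJ x I i (p2 B f \<phi>)"
  by (simp only: kd_split) (rule p2_cmb[OF KA.kd_cochs[OF p1_cochs] KJ.kd_cochs[OF p2_cochs]])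

end




context amalx
begin

lemma nz_amal: "nz Rm SR xR I i \<longleftrightarrow> nz A SA x I i \<or> nz A MJ x I i"
proof
  assume "nz Rm SR xR I i"
  then obtain \<phi> where \<phi>: "\<phi> \<in> cochs SR I i" and d: "kd Rm SR xR I i \<phi> = zc SR"
    and nc: "\<phi> \<notin> cob Rm SR xR I i" by (auto simp: nz_def)
  show "nz A SA x I i \<or> nz A MJ x I i"
  proof (rule ccontr)
    assume "\<not> (nz A SA x I i \<or> nz A MJ x I i)"
    then have nA: "\<not> nz A SA x I i" and nJ: "\<not> nz A MJ x I i" by auto
    have q1: "p1 \<phi> \<in> cochs SA I i" by (rule p1_cochs[OF \<phi>])
    have q2: "p2 B f \<phi> \<in> cochs MJ I i" by (rule p2_cochs[OF \<phi>])
    have "kd A SA x I i (p1 \<phi>) = zc SA" using kd_p1[OF \<phi>] d by simp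
    then have b1: "p1 \<phi> \<in> cob A SA x I i" using nA q1 by (auto simp: nz_def)
    have "kd A MJ x I i (p2 B f \<phi>) = zc MJ" using kd_p2[OF \<phi>] d by simp
    then have b2: "p2 B f \<phi> \<in> cob A MJ x I i" using nJ q2 by (auto simp: nz_def)
    have "\<phi> \<in> cob Rm SR xR I i"
    proof (cases "i = 0")
      case True
      then have "p1 \<phi> = zc SA" "p2 B f \<phi> = zc MJ" using b1 b2 by (simp_all add: KA.cob0 KJ.cob0)
      then have "\<phi> = zc SR" using cmb_p[OF \<phi>] by simp
      then show ?thesis by simp
    next
      case False
      obtain \<psi>1 where \<psi>1: "\<psi>1 \<in> cochs SA I (i - 1)" "p1 \<phi> = kd A SA x I (i - 1) \<psi>1"
        using b1 False by (auto simp: KA.cobS)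
      obtain \<psi>2 where \<psi>2: "\<psi>2 \<in> cochs MJ I (i - 1)" "p2 B f \<phi> = kd A MJ x I (i - 1) \<psi>2"
        using b2 False by (auto simp: KJ.cobS)
      have "\<phi> = kd Rm SR xR I (i - 1) (cmb B f \<psi>1 \<psi>2)"
        using cmb_p[OF \<phi>] kd_cmb[OF \<psi>1(1) \<psi>2(1)] \<psi>1(2) \<psi>2(2) by simp
      then show ?thesis unfolding KR.cobS[OF False] using cmb_cochs[OF \<psi>1(1) \<psi>2(1)]
        by (intro image_eqI) auto
    qed
    then show False using nc by simp
  qed
next
  assume "nz A SA x I i \<or> nz A MJ x I i"
  then show "nz Rm SR xR I i"
  proof
    assume "nz A SA x I i"
    then obtain \<alpha> where \<alpha>: "\<alpha> \<in> cochs SA I i" and d: "kd A SA x I i \<alpha> = zc SA"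
      and nc: "\<alpha> \<notin> cob A SA x I i" by (auto simp: nz_def)
    define \<phi> where "\<phi> = cmb B f \<alpha> (zc MJ)"
    have \<phi>: "\<phi> \<in> cochs SR I i" unfolding \<phi>_def by (rule cmb_cochs[OF \<alpha>]) simp
    have d\<phi>: "kd Rm SR xR I i \<phi> = zc SR" unfolding \<phi>_def kd_cmb[OF \<alpha> KJ.zc_cochs] d by simp
    have "\<phi> \<notin> cob Rm SR xR I i"
    proof
      assume b: "\<phi> \<in> cob Rm SR xR I i"
      show False
      proof (cases "i = 0")
        case True
        then have "\<phi> = zc SR" using b by (simp add: KR.cob0)
        then have "\<alpha> = zc SA" using p1_cmb[of \<alpha> "zc MJ"] \<phi>_def by simp
        then show False using nc True by (simp add: KA.cob0)
      next
        case False
        then obtain \<psi> where \<psi>: "\<psi> \<in> cochs SR I (i - 1)" "\<phi> = kd Rm SR xR I (i - 1) \<psi>"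
          using b by (auto simp: KR.cobS)
        have "\<alpha> = kd A SA x I (i - 1) (p1 \<psi>)"
          using p1_cmb[of \<alpha> "zc MJ"] \<phi>_def \<psi>(2) kd_p1[OF \<psi>(1)] by simp
        then have "\<alpha> \<in> cob A SA x I i" unfolding KA.cobS[OF False] using p1_cochs[OF \<psi>(1)]
          by (intro image_eqI) auto
        then show False using nc by simp
      qed
    qed
    then show ?thesis using \<phi> d\<phi> by (auto simp: nz_def)
  next
    assume "nz A MJ x I i"
    then obtain \<beta> where \<beta>: "\<beta> \<in> cochs MJ I i" and d: "kd A MJ x I i \<beta> = zc MJ"
      and nc: "\<beta> \<notin> cob A MJ x I i" by (auto simp: nz_def)
    define \<phi> where "\<phi> = cmb B f (zc SA) \<beta>"
    have \<phi>: "\<phi> \<in> cochs SR I i" unfolding \<phi>_def by (rule cmb_cochs[OF _ \<beta>]) simp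
    have d\<phi>: "kd Rm SR xR I i \<phi> = zc SR" unfolding \<phi>_def kd_cmb[OF KA.zc_cochs \<beta>] d by simp
    have p2\<phi>: "p2 B f \<phi> = \<beta>" unfolding \<phi>_def by (rule p2_cmb[OF KA.zc_cochs \<beta>])
    have "\<phi> \<notin> cob Rm SR xR I i"
    proof
      assume b: "\<phi> \<in> cob Rm SR xR I i"
      show False
      proof (cases "i = 0")
        case True
        then have "\<phi> = zc SR" using b by (simp add: KR.cob0)
        then have "\<beta> = zc MJ" using p2\<phi> by simp
        then show False using nc True by (simp add: KJ.cob0)
      next
        case False
        then obtain \<psi> where \<psi>: "\<psi> \<in> cochs SR I (i - 1)" "\<phi> = kd Rm SR xR I (i - 1) \<psi>"
          using b by (auto simp: KR.cobS)
        have "\<beta> = kd A MJ x I (i - 1) (p2 B f \<psi>)"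
          using p2\<phi> \<psi>(2) kd_p2[OF \<psi>(1)] by simp
        then have "\<beta> \<in> cob A MJ x I i" unfolding KJ.cobS[OF False] using p2_cochs[OF \<psi>(1)]
          by (intro image_eqI) auto
        then show False using nc by simp
      qed
    qed
    then show ?thesis using \<phi> d\<phi> by (auto simp: nz_def)
  qed
qed

lemma KG_amal: "KG Rm SR xR I = min (KG A SA x I) (KG A MJ x I)"
proof -
  have "{i. nz Rm SR xR I i} = {i. nz A SA x I i} \<union> {i. nz A MJ x I i}" using nz_amal by auto
  then show ?thesis unfolding KG_def by (simp add: INF_union inf_enat_def)
qed

end




lemma (in ring) genideal_finite:
  assumes S: "S \<subseteq> carrier R" and y: "y \<in> Idl S"
  shows "\<exists>F. finite F \<and> F \<subseteq> S \<and> y \<in> Idl F"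
proof -
  define K where "K = {y. \<exists>F. finite F \<and> F \<subseteq> S \<and> y \<in> Idl F}"
  have idF: "ideal (Idl F) R" if "F \<subseteq> S" for F using that S by (intro genideal_ideal) auto
  have monoF: "Idl F \<subseteq> Idl G" if "F \<subseteq> G" "G \<subseteq> S" for F G
    using that S by (intro subset_Idl_subset) auto
  have KE: "\<exists>F. finite F \<and> F \<subseteq> S \<and> a \<in> Idl F" if "a \<in> K" for a using that by (simp add: K_def)
  have KI: "a \<in> K" if "finite F" "F \<subseteq> S" "a \<in> Idl F" for a F using that unfolding K_def by blast
  have "ideal K R"
  proof (rule idealI)
    show "ring R" by (rule ring_axioms)
    show "subgroup K (add_monoid R)"
    proof (rule add.subgroupI)
      show "K \<subseteq> carrier R"
      proof
        fix a assume "a \<in> K"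
        then obtain F where F: "finite F" "F \<subseteq> S" "a \<in> Idl F" using KE by blast
        show "a \<in> carrier R" by (rule ideal.Icarr[OF idF[OF F(2)] F(3)])
      qed
      have "\<zero> \<in> Idl {}" using additive_subgroup.zero_closed[OF ideal.axioms(1)[OF idF[of "{}"]]] by simp
      then have "\<zero> \<in> K" by (intro KI[of "{}"]) auto
      then show "K \<noteq> {}" by blast
      fix a b assume a: "a \<in> K" and b: "b \<in> K"
      obtain F where F: "finite F" "F \<subseteq> S" "a \<in> Idl F" using KE[OF a] by blast
      have "\<ominus> a \<in> Idl F" using additive_subgroup.a_inv_closed[OF ideal.axioms(1)[OF idF[OF F(2)]] F(3)] by simp
      then show "\<ominus> a \<in> K" using F by (intro KI[of F]) auto
      obtain G where G: "finite G" "G \<subseteq> S" "b \<in> Idl G" using KE[OF b] by blast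
      have FG: "F \<union> G \<subseteq> S" "finite (F \<union> G)" using F G by auto
      have "a \<in> Idl (F \<union> G)" using monoF[of F "F \<union> G"] F(3) FG by blast
      moreover have "b \<in> Idl (F \<union> G)" using monoF[of G "F \<union> G"] G(3) FG by blast
      ultimately have "a \<oplus> b \<in> Idl (F \<union> G)"
        using additive_subgroup.a_closed[OF ideal.axioms(1)[OF idF[OF FG(1)]]] by simp
      then show "a \<oplus> b \<in> K" by (rule KI[OF FG(2) FG(1)])
    qed
    fix a x assume a: "a \<in> K" and x: "x \<in> carrier R"
    obtain F where F: "finite F" "F \<subseteq> S" "a \<in> Idl F" using KE[OF a] by blast
    have "x \<otimes> a \<in> Idl F" by (rule ideal.I_l_closed[OF idF[OF F(2)] F(3) x])
    then show "x \<otimes> a \<in> K" by (rule KI[OF F(1,2)])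
    have "a \<otimes> x \<in> Idl F" by (rule ideal.I_r_closed[OF idF[OF F(2)] F(3) x])
    then show "a \<otimes> x \<in> K" by (rule KI[OF F(1,2)])
  qed
  moreover have "S \<subseteq> K"
  proof
    fix s assume "s \<in> S"
    then have "s \<in> Idl {s}" "finite {s}" "{s} \<subseteq> S" using S by (auto intro: genideal_self')
    then show "s \<in> K" using KI by blast
  qed
  ultimately have "Idl S \<subseteq> K" by (rule genideal_minimal)
  then show ?thesis using y KE by blast
qed

lemma (in ring) genideal_finite_list:
  assumes S: "S \<subseteq> carrier R" and ys: "set ys \<subseteq> Idl S"
  shows "\<exists>F. finite F \<and> F \<subseteq> S \<and> set ys \<subseteq> Idl F"
  using ys
proof (induction ys)
  case Nil then show ?case by auto
next
  case (Cons y ys)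
  then obtain F where F: "finite F" "F \<subseteq> S" "set ys \<subseteq> Idl F" by auto
  have "y \<in> Idl S" using Cons.prems by simp
  then obtain G where G: "finite G" "G \<subseteq> S" "y \<in> Idl G" using genideal_finite[OF S] by blast
  have FG: "F \<union> G \<subseteq> carrier R" using F G S by blast
  have "Idl F \<subseteq> Idl (F \<union> G)" by (rule subset_Idl_subset[OF FG]) blast
  moreover have "Idl G \<subseteq> Idl (F \<union> G)" by (rule subset_Idl_subset[OF FG]) blast
  ultimately show ?case using F G by (intro exI[of _ "F \<union> G"]) auto
qed

context amal
begin

interpretation Rc2: cring Rm by (rule amal_cring)

abbreviation "SA \<equiv> self_module A"
abbreviation "SR \<equiv> self_module Rm"
abbreviation "\<iota> \<equiv> (\<lambda>a. (a, f a))"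

lemma modSA: "module A SA" by (rule module_self[OF R.is_cring])
lemma modSR: "module Rm SR" by (rule module_self[OF amal_cring])

lemma kg_amal_list:
  assumes xs: "set xs \<subseteq> carrier A"
  shows "Kgrade_gens Rm (map \<iota> xs) SR = min (Kgrade_gens A xs SA) (Kgrade_gens A xs MJ)"
proof -
  interpret X: amalx A B f J "lext A xs" by unfold_locales (use xs in \<open>auto simp: lext_def\<close>)
  have xsR: "set (map \<iota> xs) \<subseteq> carrier Rm" using xs X.iota_mem by auto
  have le: "lext Rm (map \<iota> xs) = (\<lambda>j. (lext A xs j, f (lext A xs j)))"
    by (auto simp: lext_def fun_eq_iff)
  show ?thesis
    unfolding module.kgrade_gens_eq[OF modSR xsR] module.kgrade_gens_eq[OF modSA xs]
      module.kgrade_gens_eq[OF module_J xs] le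
    using X.KG_amal by simp
qed


lemma iota_memA: "a \<in> carrier A \<Longrightarrow> (a, f a) \<in> carrier Rm"
  using amal_memI[of a "\<zero>\<^bsub>B\<^esub>"] by (simp add: JI.additive_subgroup_axioms additive_subgroup.zero_closed)

lemma ext_carrier: "I \<subseteq> carrier A \<Longrightarrow> amalg_ext A B f J I \<subseteq> carrier Rm"
proof -
  assume I: "I \<subseteq> carrier A"
  have "\<iota> ` I \<subseteq> carrier Rm" using I by (auto intro!: iota_memA)
  then have id: "ideal (Idl\<^bsub>Rm\<^esub> (\<iota> ` I)) Rm" by (rule Rc2.genideal_ideal)
  show ?thesis unfolding amalg_ext_def
  proof
    fix y assume "y \<in> Idl\<^bsub>Rm\<^esub> (\<iota> ` I)"
    then show "y \<in> carrier Rm" by (rule ideal.Icarr[OF id])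
  qed
qed

lemma iota_ext: "I \<subseteq> carrier A \<Longrightarrow> \<iota> ` I \<subseteq> amalg_ext A B f J I"
proof -
  assume I: "I \<subseteq> carrier A"
  have "\<iota> ` I \<subseteq> carrier Rm" using I by (auto intro!: iota_memA)
  then show ?thesis unfolding amalg_ext_def by (rule Rc2.genideal_self)
qed

lemma core_le:
  assumes I: "I \<subseteq> carrier A"
  shows "Kgrade Rm (amalg_ext A B f J I) SR \<le> Kgrade A I SA"
  unfolding Kgrade_def[of Rm]
proof (rule SUP_least)
  fix ys assume "ys \<in> {ys. set ys \<subseteq> amalg_ext A B f J I}"
  then have ys: "set ys \<subseteq> Idl\<^bsub>Rm\<^esub> (\<iota> ` I)" by (simp add: amalg_ext_def)
  have iI: "\<iota> ` I \<subseteq> carrier Rm" using I by (auto intro!: iota_memA)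
  have ysc: "set ys \<subseteq> carrier Rm" using ys ext_carrier[OF I] by (simp add: amalg_ext_def)
  obtain F where F: "finite F" "F \<subseteq> \<iota> ` I" "set ys \<subseteq> Idl\<^bsub>Rm\<^esub> F"
    using Rc2.genideal_finite_list[OF iI ys] by blast
  have Fe: "F = \<iota> ` (fst ` F)" using F(2) by force
  obtain xs where xs: "set xs = fst ` F" using finite_list[of "fst ` F"] F(1) by blast
  have xsI: "set xs \<subseteq> I" using xs F(2) by auto
  have xsA: "set xs \<subseteq> carrier A" using xsI I by blast
  have mx: "set (map \<iota> xs) = F" using xs Fe by simp
  have mxc: "set (map \<iota> xs) \<subseteq> carrier Rm" using mx F(2) iI by blast
  have "Kgrade_gens Rm ys SR \<le> Kgrade_gens Rm (ys @ map \<iota> xs) SR"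
    by (rule module.kg_prefix[OF modSR ysc mxc])
  also have "... \<le> Kgrade_gens Rm (map \<iota> xs) SR"
    by (rule module.kg_redundant[OF modSR ysc mxc]) (use F(3) mx in simp)
  also have "... \<le> Kgrade_gens A xs SA" using kg_amal_list[OF xsA] by simp
  also have "... \<le> (SUP xs \<in> {xs. set xs \<subseteq> I}. Kgrade_gens A xs SA)"
    by (rule SUP_upper) (use xsI in simp)
  finally show "Kgrade_gens Rm ys SR \<le> Kgrade A I SA" by (simp add: Kgrade_def)
qed

lemma core_ge:
  assumes Iid: "ideal I A"
    and H: "\<And>xs. set xs \<subseteq> I \<Longrightarrow> Kgrade_gens A xs SA \<le> Kgrade A (Idl\<^bsub>A\<^esub> (set xs)) MJ"
  shows "Kgrade A I SA \<le> Kgrade Rm (amalg_ext A B f J I) SR"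
  unfolding Kgrade_def[of A I]
proof (rule SUP_least)
  have I: "I \<subseteq> carrier A" using ideal.Icarr[OF Iid] by blast
  fix xs assume "xs \<in> {xs. set xs \<subseteq> I}"
  then have xsI: "set xs \<subseteq> I" by simp
  have xsA: "set xs \<subseteq> carrier A" using xsI I by blast
  have bI: "Idl\<^bsub>A\<^esub> (set xs) \<subseteq> I" by (rule R.genideal_minimal[OF Iid xsI])
  show "Kgrade_gens A xs SA \<le> Kgrade Rm (amalg_ext A B f J I) SR"
  proof (rule enat_le_by_nat)
    fix n assume n: "enat n \<le> Kgrade_gens A xs SA"
    show "enat n \<le> Kgrade Rm (amalg_ext A B f J I) SR"
    proof (cases n)
      case 0 then show ?thesis by (simp add: zero_enat_def[symmetric])
    next
      case (Suc m)
      then have "enat m < Kgrade_gens A xs SA" using n Suc_ile_eq[of m "Kgrade_gens A xs SA"] by simp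
      also have "... \<le> Kgrade A (Idl\<^bsub>A\<^esub> (set xs)) MJ" by (rule H[OF xsI])
      finally have "enat m < (SUP v \<in> {v. set v \<subseteq> Idl\<^bsub>A\<^esub> (set xs)}. Kgrade_gens A v MJ)"
        by (simp add: Kgrade_def)
      then obtain v where v: "set v \<subseteq> Idl\<^bsub>A\<^esub> (set xs)" and mv: "enat m < Kgrade_gens A v MJ"
        by (auto simp: less_SUP_iff)
      have vA: "set v \<subseteq> carrier A" using v bI I by blast
      have nv: "enat n \<le> Kgrade_gens A v MJ" using mv Suc Suc_ile_eq[of m "Kgrade_gens A v MJ"] by simp
      define w where "w = xs @ v"
      have wI: "set w \<subseteq> I" using xsI v bI by (auto simp: w_def)
      have wA: "set w \<subseteq> carrier A" using wI I by blast
      have "enat n \<le> Kgrade_gens A w SA"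
        using n module.kg_prefix[OF modSA xsA vA] by (simp add: w_def)
      moreover have "enat n \<le> Kgrade_gens A w MJ"
        using nv module.kg_suffix[OF module_J xsA vA] by (simp add: w_def)
      ultimately have "enat n \<le> Kgrade_gens Rm (map \<iota> w) SR" using kg_amal_list[OF wA] by simp
      also have "... \<le> Kgrade Rm (amalg_ext A B f J I) SR"
        unfolding Kgrade_def by (rule SUP_upper) (use iota_ext[OF I] wI in auto)
      finally show ?thesis .
    qed
  qed
qed

lemma main_generic:
  assumes C1: "\<And>I. C I \<Longrightarrow> ideal I A"
    and C2: "\<And>xs. set xs \<subseteq> carrier A \<Longrightarrow> C (Idl\<^bsub>A\<^esub> (set xs))"
  shows "CM_in_sense A C \<and> (\<forall>I. C I \<longrightarrow> Kgrade A I MJ \<ge> height A I)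
     \<longrightarrow> (\<forall>I. C I \<longrightarrow> Kgrade Rm (amalg_ext A B f J I) SR = Kgrade A I SA \<and> Kgrade A I SA \<le> Kgrade A I MJ)"
proof (intro impI allI)
  fix I assume hyp: "CM_in_sense A C \<and> (\<forall>I. C I \<longrightarrow> Kgrade A I MJ \<ge> height A I)" and CI: "C I"
  have CM: "\<And>I. C I \<Longrightarrow> height A I = Kgrade A I SA" using hyp by (simp add: CM_in_sense_def)
  have HJ: "\<And>I. C I \<Longrightarrow> height A I \<le> Kgrade A I MJ" using hyp by simp
  have Iid: "ideal I A" by (rule C1[OF CI])
  have I: "I \<subseteq> carrier A" using ideal.Icarr[OF Iid] by blast
  have H: "Kgrade_gens A xs SA \<le> Kgrade A (Idl\<^bsub>A\<^esub> (set xs)) MJ" if xsI: "set xs \<subseteq> I" for xs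
  proof -
    have xsA: "set xs \<subseteq> carrier A" using xsI I by blast
    have Cb: "C (Idl\<^bsub>A\<^esub> (set xs))" by (rule C2[OF xsA])
    have "Kgrade_gens A xs SA \<le> Kgrade A (Idl\<^bsub>A\<^esub> (set xs)) SA"
      unfolding Kgrade_def by (rule SUP_upper) (use R.genideal_self[OF xsA] in simp)
    also have "... = height A (Idl\<^bsub>A\<^esub> (set xs))" using CM[OF Cb] by simp
    also have "... \<le> Kgrade A (Idl\<^bsub>A\<^esub> (set xs)) MJ" by (rule HJ[OF Cb])
    finally show ?thesis .
  qed
  have "Kgrade Rm (amalg_ext A B f J I) SR = Kgrade A I SA"
    by (rule antisym[OF core_le[OF I] core_ge[OF Iid H]])
  moreover have "Kgrade A I SA \<le> Kgrade A I MJ" using CM[OF CI] HJ[OF CI] by simp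
  ultimately show "Kgrade Rm (amalg_ext A B f J I) SR = Kgrade A I SA \<and> Kgrade A I SA \<le> Kgrade A I MJ" by simp
qed

end

theorem lemma3p2:
  fixes A :: "('a, 'c) ring_scheme" and B :: "('b, 'd) ring_scheme"
    and f :: "'a \<Rightarrow> 'b" and J :: "'b set"
  assumes "cring A" and "cring B" and "f \<in> ring_hom A B" and "ideal J B"
  shows
   "(CM_in_sense A (\<lambda>I. ideal I A) \<and>
     (\<forall>I. ideal I A \<longrightarrow> Kgrade A I (ideal_module_via A B f J) \<ge> height A I)
     \<longrightarrow> (\<forall>I. ideal I A \<longrightarrow>
           Kgrade (amalgamation A B f J) (amalg_ext A B f J I) (self_module (amalgamation A B f J))
             = Kgrade A I (self_module A)
         \<and> Kgrade A I (self_module A) \<le> Kgrade A I (ideal_module_via A B f J)))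
  \<and> (CM_in_sense A (finitely_generated_ideal A) \<and>
     (\<forall>I. finitely_generated_ideal A I \<longrightarrow> Kgrade A I (ideal_module_via A B f J) \<ge> height A I)
     \<longrightarrow> (\<forall>I. finitely_generated_ideal A I \<longrightarrow>
           Kgrade (amalgamation A B f J) (amalg_ext A B f J I) (self_module (amalgamation A B f J))
             = Kgrade A I (self_module A)
         \<and> Kgrade A I (self_module A) \<le> Kgrade A I (ideal_module_via A B f J)))"
proof -
  interpret AM: amal A B f J
    by (intro amal.intro ring_hom_cring.intro ring_hom_cring_axioms.intro amal_axioms.intro assms)
  have g1: "CM_in_sense A (\<lambda>I. ideal I A) \<and>
     (\<forall>I. ideal I A \<longrightarrow> Kgrade A I (ideal_module_via A B f J) \<ge> height A I)
     \<longrightarrow> (\<forall>I. ideal I A \<longrightarrow>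
           Kgrade (amalgamation A B f J) (amalg_ext A B f J I) (self_module (amalgamation A B f J))
             = Kgrade A I (self_module A)
         \<and> Kgrade A I (self_module A) \<le> Kgrade A I (ideal_module_via A B f J))"
    by (rule AM.main_generic) (auto intro: AM.R.genideal_ideal)
  have g2: "CM_in_sense A (finitely_generated_ideal A) \<and>
     (\<forall>I. finitely_generated_ideal A I \<longrightarrow> Kgrade A I (ideal_module_via A B f J) \<ge> height A I)
     \<longrightarrow> (\<forall>I. finitely_generated_ideal A I \<longrightarrow>
           Kgrade (amalgamation A B f J) (amalg_ext A B f J I) (self_module (amalgamation A B f J))
             = Kgrade A I (self_module A)
         \<and> Kgrade A I (self_module A) \<le> Kgrade A I (ideal_module_via A B f J))"
  proof (rule AM.main_generic)
    fix I assume "finitely_generated_ideal A I" then show "ideal I A" by (simp add: finitely_generated_ideal_def)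
  next
    fix xs :: "'a list" assume xs: "set xs \<subseteq> carrier A"
    show "finitely_generated_ideal A (Idl\<^bsub>A\<^esub> (set xs))"
      unfolding finitely_generated_ideal_def using AM.R.genideal_ideal[OF xs] xs by blast
  qed
  show ?thesis using g1 g2 by (rule conjI)
qed



end
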